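(* Let $k\in\frac12+\mathbb Z$ with $k>\frac52$, let $N\in 4\mathbb N$, let $f\in S_k(\Gamma_0^*(N))$ (i.e. $f$ is a cusp form of weight $k$ for $\Gamma_0(N)$ with $f|_kW_N=f$), and let $a\in[0,2k-\frac92]$. For $z,w\in\mathfrak H$ put $$\Phi_a(z,w)=\sum_{n=0}^{k-5/2}\left[\binom{k-2}{n}(iNz)^n w^{a-n}+\frac{i^k}{N^{1/4}}\binom{k-2}{n+\frac12}(iz)^n(-Nw)^{2k-\frac92-a-n}\right],$$ $$P_a(z)=\int_0^{i\infty}f(w)\Phi_a(z,w)\,dw,\qquad F_a(z)=\int_z^{i\infty}f(w)\Phi_a(z,w)\,dw .$$ Then: (i) For all $z\in\mathfrak H$, $-i^{k-5/2}\,(F_a|_{5/2-k}W_N)(z)+F_a(z)=P_a(z)$. Consequently, if $\chi$ is a character of $\Gamma_0^*(N)$ with $\chi(W_N)=i^{\frac52-k}$, then $P_a|_{5/2-k,\chi}(W_N+1)=0$; in particular, if $4\mid (k-\frac52)$, then $P_a|_{5/2-k}(W_N+1)=0$. (ii) $P_a$ is a polynomial of degree at most $k-\frac52$, and for every $z\in\mathbb C$, $$P_a(z)=i^{a+1}\sum_{n=0}^{k-5/2}\left[\binom{k-2}{n}N^n\Lambda_f(a+1-n)+\binom{k-2}{n+\frac12}N^{2k-a-n-\frac{19}{4}}\,i^{2n-k+\frac12}\,\Lambda_f\!\left(2k-\tfrac72-a-n\right)\right]z^n.$$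
   Context: All complex powers use the principal branch of the logarithm, with $-\pi<\arg z\le\pi$; in particular $i^t=e^{i\pi t/2}$ for real $t$. $\mathfrak H$ is the upper half-plane. For $z,w\in\mathbb C$, $\binom{z}{w}:=\frac{\Gamma(z+1)}{\Gamma(w+1)\Gamma(z-w+1)}$. Half-integral weight action: for odd $d$, $\epsilon_d=1$ if $d\equiv1\pmod 4$ and $\epsilon_d=i$ if $d\equiv 3\pmod 4$; $\left(\frac cd\right)$ is the Kronecker symbol. For $k\in\frac12+\mathbb Z$ and $\gamma=\begin{pmatrix}*&*\\c&d\end{pmatrix}\in\Gamma_0(N)$, $(f|_k\gamma)(z)=\left(\frac cd\right)\epsilon_d^{2k}(cz+d)^{-k}f(\gamma z)$. With $W_N=\begin{pmatrix}0&-1/\sqrt N\\ \sqrt N&0\end{pmatrix}$, $(f|_kW_N)(z)=(-i\sqrt N z)^{-k}f(-1/(Nz))$. $\Gamma_0^*(N)=\langle\Gamma_0(N),W_N\rangle$. $S_k(\Gamma_0^*(N))$ denotes the holomorphic cusp forms $f$ on $\mathfrak H$ with $f|_k\gamma=f$ for all $\gamma\in\Gamma_0(N)$ and $f|_kW_N=f$. Actions extend linearly to the group ring. Integral weight action: for $m\in\mathbb Z$ and $\gamma=\begin{pmatrix}*&*\\c&d\end{pmatrix}\in \mathrm{SL}_2(\mathbb R)$, $(F|_m\gamma)(z)=(cz+d)^{-m}F(\gamma z)$; thus $(F|_{5/2-k}W_N)(z)=(\sqrt N z)^{k-5/2}F(-1/(Nz))$. For a character $\chi$, $F|_{m,\chi}\gamma:=\overline{\chi(\gamma)}\,F|_m\gamma$.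 $L$-series: for $f(z)=\sum_{n\ge1}a_f(n)e^{2\pi i n z}$, $\Lambda_f(s)=\int_0^\infty f(it)t^{s-1}\,dt=(2\pi)^{-s}\Gamma(s)\sum_{n\ge1}a_f(n)n^{-s}$, extended to an entire function. *)

theory Defs
  imports "HOL-Analysis.Analysis" "HOL-Number_Theory.Number_Theory"
          "HOL-Computational_Algebra.Polynomial"
begin

definition upper_half_plane :: "complex set" where
  "upper_half_plane = {z. Im z > 0}"

definition gbinom :: "real \<Rightarrow> real \<Rightarrow> real" where
  "gbinom z w = Gamma (z + 1) / (Gamma (w + 1) * Gamma (z - w + 1))"

definition jacobi :: "int \<Rightarrow> nat \<Rightarrow> int" where
  "jacobi c n = (\<Prod>p\<in>prime_factors n. Legendre c (int p) ^ multiplicity p n)"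

text \<open>Kronecker symbol (c/d) for odd d (the only case used): (c/d) = (c/-1)^[d<0] (c/|d|),
  where (c/-1) = -1 if c < 0 and 1 otherwise.\<close>
definition kronecker :: "int \<Rightarrow> int \<Rightarrow> int" where
  "kronecker c d = (if d < 0 \<and> c < 0 then -1 else 1) * jacobi c (nat \<bar>d\<bar>)"

definition eps :: "int \<Rightarrow> complex" where
  "eps d = (if d mod 4 = 1 then 1 else \<i>)"

definition Gamma0 :: "nat \<Rightarrow> (int \<times> int \<times> int \<times> int) set" where
  "Gamma0 N = {(a,b,c,d). a * d - b * c = 1 \<and> int N dvd c}"

definition SL2Z :: "(int \<times> int \<times> int \<times> int) set" where
  "SL2Z = {(a,b,c,d). a * d - b * c = 1}"

definition slash_half :: "real \<Rightarrow> int \<times> int \<times> int \<times> int \<Rightarrow> (complex \<Rightarrow> complex) \<Rightarrow> complex \<Rightarrow> complex" where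
  "slash_half k \<gamma> f z = (case \<gamma> of (a,b,c,d) \<Rightarrow>
      of_int (kronecker c d) * eps d powr (of_real (2 * k)) *
      (of_int c * z + of_int d) powr (- of_real k) *
      f ((of_int a * z + of_int b) / (of_int c * z + of_int d)))"

definition slash_half_W :: "real \<Rightarrow> nat \<Rightarrow> (complex \<Rightarrow> complex) \<Rightarrow> complex \<Rightarrow> complex" where
  "slash_half_W k N f z = (- \<i> * of_real (sqrt (real N)) * z) powr (- of_real k) * f (- 1 / (of_nat N * z))"

text \<open>Cusp form of weight k for Gamma_0^*(N): holomorphic on H, invariant under Gamma_0(N)
  and W_N, and vanishing at every cusp: for every sigma in SL_2(Z),
  (cz+d)^(-k) f(sigma z) tends to 0 as Im z tends to infinity, uniformly in Re z.\<close>
definition cusp_form_star :: "real \<Rightarrow> nat \<Rightarrow> (complex \<Rightarrow> complex) \<Rightarrow> bool" where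
  "cusp_form_star k N f \<longleftrightarrow>
     f holomorphic_on upper_half_plane \<and>
     (\<forall>\<gamma>\<in>Gamma0 N. \<forall>z\<in>upper_half_plane. slash_half k \<gamma> f z = f z) \<and>
     (\<forall>z\<in>upper_half_plane. slash_half_W k N f z = f z) \<and>
     (\<forall>(a,b,c,d)\<in>SL2Z. \<forall>e>0. \<exists>Y. \<forall>z. Im z > Y \<longrightarrow>
        norm ((of_int c * z + of_int d) powr (- of_real k) *
              f ((of_int a * z + of_int b) / (of_int c * z + of_int d))) < e)"

definition Lambda :: "(complex \<Rightarrow> complex) \<Rightarrow> complex \<Rightarrow> complex" where
  "Lambda f s = (LBINT t:{0<..}. f (\<i> * of_real t) * (of_real t) powr (s - 1))"

type_synonym mat2 = "real \<times> real \<times> real \<times> real"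

definition mmul :: "mat2 \<Rightarrow> mat2 \<Rightarrow> mat2" where
  "mmul m1 m2 = (case m1 of (a,b,c,d) \<Rightarrow> case m2 of (a',b',c',d') \<Rightarrow>
     (a*a' + b*c', a*b' + b*d', c*a' + d*c', c*b' + d*d'))"

definition mat_of_int :: "int \<times> int \<times> int \<times> int \<Rightarrow> mat2" where
  "mat_of_int \<gamma> = (case \<gamma> of (a,b,c,d) \<Rightarrow> (of_int a, of_int b, of_int c, of_int d))"

definition idmat :: mat2 where "idmat = (1, 0, 0, 1)"

definition WN :: "nat \<Rightarrow> mat2" where
  "WN N = (0, - 1 / sqrt (real N), sqrt (real N), 0)"

inductive_set Gamma0_star :: "nat \<Rightarrow> mat2 set" for N where
  gen: "\<gamma> \<in> Gamma0 N \<Longrightarrow> mat_of_int \<gamma> \<in> Gamma0_star N"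
| fricke: "WN N \<in> Gamma0_star N"
| mult: "g \<in> Gamma0_star N \<Longrightarrow> h \<in> Gamma0_star N \<Longrightarrow> mmul g h \<in> Gamma0_star N"

definition is_character :: "nat \<Rightarrow> (mat2 \<Rightarrow> complex) \<Rightarrow> bool" where
  "is_character N chi \<longleftrightarrow>
     (\<forall>g\<in>Gamma0_star N. chi g \<noteq> 0) \<and>
     (\<forall>g\<in>Gamma0_star N. \<forall>h\<in>Gamma0_star N. chi (mmul g h) = chi g * chi h)"

text \<open>Integral weight action (F|_m gamma)(z) = (cz+d)^(-m) F(gamma z); the weight is integral
  in all uses, where powr agrees with the integer power.\<close>
definition slash_int :: "real \<Rightarrow> mat2 \<Rightarrow> (complex \<Rightarrow> complex) \<Rightarrow> complex \<Rightarrow> complex" where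
  "slash_int m \<gamma> F z = (case \<gamma> of (a,b,c,d) \<Rightarrow>
     (of_real c * z + of_real d) powr (- of_real m) *
     F ((of_real a * z + of_real b) / (of_real c * z + of_real d)))"

definition slash_int_chi :: "real \<Rightarrow> (mat2 \<Rightarrow> complex) \<Rightarrow> mat2 \<Rightarrow> (complex \<Rightarrow> complex) \<Rightarrow> complex \<Rightarrow> complex" where
  "slash_int_chi m chi \<gamma> F z = cnj (chi \<gamma>) * slash_int m \<gamma> F z"

definition Phi :: "real \<Rightarrow> nat \<Rightarrow> real \<Rightarrow> complex \<Rightarrow> complex \<Rightarrow> complex" where
  "Phi k N a z w = (\<Sum>n = 0..nat \<lfloor>k - 5/2\<rfloor>.
      of_real (gbinom (k - 2) (real n)) * (\<i> * of_nat N * z) ^ n * w powr (of_real (a - real n))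
    + \<i> powr (of_real k) / of_real (real N powr (1/4)) * of_real (gbinom (k - 2) (real n + 1/2))
      * (\<i> * z) ^ n * (- of_nat N * w) powr (of_real (2 * k - 9/2 - a - real n)))"

text \<open>P_a(z) = int_0^{i infty} f(w) Phi_a(z,w) dw, along the imaginary axis w = it.\<close>
definition Pa :: "real \<Rightarrow> nat \<Rightarrow> real \<Rightarrow> (complex \<Rightarrow> complex) \<Rightarrow> complex \<Rightarrow> complex" where
  "Pa k N a f z = (LBINT t:{0<..}. f (\<i> * of_real t) * Phi k N a z (\<i> * of_real t) * \<i>)"

text \<open>F_a(z) = int_z^{i infty} f(w) Phi_a(z,w) dw, along the vertical ray w = z + it.\<close>
definition Fa :: "real \<Rightarrow> nat \<Rightarrow> real \<Rightarrow> (complex \<Rightarrow> complex) \<Rightarrow> complex \<Rightarrow> complex" where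
  "Fa k N a f z = (LBINT t:{0<..}. f (z + \<i> * of_real t) * Phi k N a z (z + \<i> * of_real t) * \<i>)"

end

theory Submission
  imports Defs "HOL-Real_Asymp.Real_Asymp" "HOL-Complex_Analysis.Complex_Analysis"
begin

locale cf =
  fixes k :: real and N :: nat and f :: "complex \<Rightarrow> complex"
  assumes k_half: "k - 1/2 \<in> \<int>" and k_gt: "k > 5/2" and N_pos: "N > 0"
    and f_cusp: "cusp_form_star k N f"
begin

lemma f_hol: "f holomorphic_on upper_half_plane"
  using f_cusp unfolding cusp_form_star_def by blast

lemma f_period: assumes "Im w > 0" shows "f (w + of_int j) = f w"
proof -
  have g: "(1, j, 0, 1) \<in> Gamma0 N" unfolding Gamma0_def by simp
  have "w \<in> upper_half_plane" using assms by (simp add: upper_half_plane_def)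
  then have "slash_half k (1,j,0,1) f w = f w" using f_cusp g unfolding cusp_form_star_def by blast
  moreover have "kronecker 0 1 = 1" by (simp add: kronecker_def jacobi_def)
  moreover have "eps 1 = 1" by (simp add: eps_def)
  ultimately show ?thesis by (simp add: slash_half_def add.commute)
qed

lemma f_W: assumes "Im w > 0"
  shows "f (- 1 / (of_nat N * w)) = (- \<i> * of_real (sqrt (real N)) * w) powr (of_real k) * f w"
proof -
  have "w \<in> upper_half_plane" using assms by (simp add: upper_half_plane_def)
  then have e: "(- \<i> * of_real (sqrt (real N)) * w) powr (- of_real k) * f (- 1 / (of_nat N * w)) = f w"
    using f_cusp unfolding cusp_form_star_def slash_half_W_def by blast
  have w0: "w \<noteq> 0" using assms by auto
  have nz: "(- \<i> * of_real (sqrt (real N)) * w) \<noteq> 0" using w0 N_pos by auto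
  have "f w * (- \<i> * of_real (sqrt (real N)) * w) powr (of_real k)
      = (- \<i> * of_real (sqrt (real N)) * w) powr (of_real k) * (- \<i> * of_real (sqrt (real N)) * w) powr (- of_real k) * f (- 1 / (of_nat N * w))"
    by (subst e[symmetric]) (simp add: algebra_simps)
  also have "\<dots> = f (- 1 / (of_nat N * w))"
    using nz by (simp add: powr_minus)
  finally show ?thesis by (simp add: mult.commute)
qed

lemma f_to_zero: assumes "e > 0" shows "\<exists>Y. \<forall>w. Im w > Y \<longrightarrow> norm (f w) < e"
proof -
  have "(1,0,0,1) \<in> SL2Z" by (simp add: SL2Z_def)
  then have "\<exists>Y. \<forall>z. Im z > Y \<longrightarrow> norm ((of_int 0 * z + of_int 1) powr (- of_real k) *
              f ((of_int 1 * z + of_int 0) / (of_int 0 * z + of_int 1))) < e"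
    using f_cusp assms unfolding cusp_form_star_def by blast
  then show ?thesis by simp
qed

end

context cf begin

lemma f_same_exp:
  assumes "Im u > 0" "Im w > 0" "exp (2 * pi * \<i> * u) = exp (2 * pi * \<i> * w)"
  shows "f u = f w"
proof -
  obtain n :: int where n: "2 * pi * \<i> * u = 2 * pi * \<i> * w + of_real (2 * pi * of_int n) * \<i>"
    using assms(3) unfolding exp_eq by (auto simp: algebra_simps)
  then have "u = w + of_int n"
  proof -
    have "(2 * pi * \<i>) * u = (2 * pi * \<i>) * (w + of_int n)" using n by (simp add: algebra_simps)
    then show ?thesis by (subst (asm) mult_cancel_left) simp
  qed
  then show ?thesis using f_period assms(2) by simp
qed

end

context cf begin

lemma Im_Ln_div: assumes "q \<noteq> 0" shows "Im (Ln q / (2 * pi * \<i>)) = - ln (norm q) / (2 * pi)"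
  using assms by (simp add: Im_divide Re_Ln field_simps power2_eq_square)

lemma exp_Ln_div: assumes "q \<noteq> 0" shows "exp (2 * pi * \<i> * (Ln q / (2 * pi * \<i>))) = q"
  using assms by simp

lemma norm_exp_2pii: "norm (exp (2 * pi * \<i> * w)) = exp (- 2 * pi * Im w)"
  by (simp add: norm_exp_eq_Re)

definition qf :: "complex \<Rightarrow> complex" where "qf q = f (Ln q / (2 * pi * \<i>))"

lemma qf_hol: "qf holomorphic_on (ball 0 1 - {0})"
proof -
  have "qf field_differentiable at q0" if q0: "q0 \<in> ball 0 1 - {0}" for q0
  proof -
    have q0nz: "q0 \<noteq> 0" and q01: "norm q0 < 1" using q0 by auto
    define w0 where "w0 = Ln q0 / (2 * pi * \<i>)"
    define h where "h = (\<lambda>q. f (w0 + Ln (q / q0) / (2 * pi * \<i>)))"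
    define S where "S = ball 0 1 \<inter> ball q0 (norm q0) - {0}"
    have openS: "open S" unfolding S_def by (intro open_Diff open_Int) auto
    have q0S: "q0 \<in> S" using q0 by (auto simp: S_def)
    have Sprop: "q \<noteq> 0 \<and> norm q < 1 \<and> norm (q / q0 - 1) < 1" if "q \<in> S" for q
    proof -
      have "norm (q - q0) < norm q0" using that by (auto simp: S_def dist_norm norm_minus_commute)
      then have "norm ((q - q0) / q0) < 1" using q0nz by (simp add: norm_divide)
      then show ?thesis using that q0nz by (auto simp: S_def diff_divide_distrib)
    qed
    have Im_arg: "Im (w0 + Ln (q / q0) / (2 * pi * \<i>)) = - ln (norm q) / (2 * pi)" if "q \<in> S" for q
    proof -
      have "q \<noteq> 0" using Sprop that by auto
      then have "Im (w0 + Ln (q / q0) / (2 * pi * \<i>)) = - ln (norm q0) / (2 * pi) - ln (norm (q/q0)) / (2 * pi)"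
        using q0nz unfolding w0_def by (simp add: Im_divide Re_Ln field_simps power2_eq_square)
      also have "\<dots> = - ln (norm q) / (2 * pi)"
        using q0nz \<open>q \<noteq> 0\<close> by (simp add: norm_divide ln_div field_simps)
      finally show ?thesis .
    qed
    have eq: "qf q = h q" if "q \<in> S" for q
    proof -
      have qnz: "q \<noteq> 0" and q1: "norm q < 1" using Sprop that by auto
      have pos: "- ln (norm q) / (2 * pi) > 0" using qnz q1 by (simp add: divide_neg_pos ln_less_zero)
      have "exp (2 * pi * \<i> * (w0 + Ln (q / q0) / (2 * pi * \<i>))) = exp (Ln q0) * exp (Ln (q / q0))"
        unfolding w0_def by (simp add: distrib_left exp_add)
      also have "\<dots> = q" using q0nz qnz by simp
      finally have e1: "exp (2 * pi * \<i> * (w0 + Ln (q / q0) / (2 * pi * \<i>))) = q" .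
      show ?thesis unfolding qf_def h_def
        by (rule f_same_exp) (use Im_Ln_div[OF qnz] Im_arg[OF that] pos e1 exp_Ln_div[OF qnz] in auto)
    qed
    have "h field_differentiable at q" if qS: "q \<in> S" for q
    proof -
      have qnz: "q \<noteq> 0" and q1: "norm q < 1" and qq: "norm (q / q0 - 1) < 1" using Sprop qS by auto
      have "Re (q / q0) > 0"
      proof (rule ccontr)
        assume "\<not> Re (q / q0) > 0"
        then have "1 \<le> \<bar>Re (q / q0 - 1)\<bar>" by simp
        also have "\<dots> \<le> norm (q / q0 - 1)" by (rule abs_Re_le_cmod)
        finally show False using qq by simp
      qed
      then have nr: "q / q0 \<notin> \<real>\<^sub>\<le>\<^sub>0" by (auto simp: nonpos_Reals_def complex_nonpos_Reals_iff)
      have d1: "(\<lambda>q. w0 + Ln (q / q0) / (2 * pi * \<i>)) field_differentiable at q"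
      proof -
        have "(\<lambda>q. q / q0) field_differentiable at q" using q0nz by (intro derivative_intros)
        moreover have "Ln field_differentiable at (q / q0)" using nr by (rule field_differentiable_at_Ln)
        ultimately have "(Ln \<circ> (\<lambda>q. q / q0)) field_differentiable at q" by (rule field_differentiable_compose)
        then have "(\<lambda>q. Ln (q / q0)) field_differentiable at q" by (simp add: o_def)
        then show ?thesis by (intro derivative_intros) auto
      qed
      have pos: "- ln (norm q) / (2 * pi) > 0" using qnz q1 by (simp add: divide_neg_pos ln_less_zero)
      have "f field_differentiable at (w0 + Ln (q / q0) / (2 * pi * \<i>))"
        using f_hol Im_arg[OF qS] pos
        by (intro holomorphic_on_imp_differentiable_at[where s=upper_half_plane])
           (auto simp: upper_half_plane_def open_halfspace_Im_gt)
      with d1 have "(f \<circ> (\<lambda>q. w0 + Ln (q / q0) / (2 * pi * \<i>))) field_differentiable at q"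
        by (rule field_differentiable_compose)
      then show ?thesis by (simp add: h_def o_def)
    qed
    then have "h holomorphic_on S" using openS by (simp add: holomorphic_on_open field_differentiable_def)
    then have "qf holomorphic_on S" by (rule holomorphic_transform) (use eq in auto)
    then show ?thesis using openS q0S by (rule holomorphic_on_imp_differentiable_at)
  qed
  then show ?thesis by (simp add: holomorphic_on_open field_differentiable_def open_Diff)
qed

end

context cf begin

lemma qf_lim: "(qf \<longlongrightarrow> 0) (at 0)"
proof (rule tendstoI)
  fix e :: real assume "e > 0"
  then obtain Ye where Ye: "\<forall>w. Im w > Ye \<longrightarrow> norm (f w) < e" using f_to_zero by blast
  define d where "d = exp (- 2 * pi * max Ye 1)"
  have d0: "d > 0" by (simp add: d_def)
  have "\<forall>q::complex. q \<noteq> 0 \<and> dist q 0 < d \<longrightarrow> dist (qf q) 0 < e"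
  proof (intro allI impI)
    fix q :: complex assume q: "q \<noteq> 0 \<and> dist q 0 < d"
    then have "ln (norm q) < ln d" using d0 by simp
    then have "ln (norm q) < - 2 * pi * max Ye 1" by (simp add: d_def)
    then have "max Ye 1 * (2 * pi) < - ln (norm q)" by (simp add: algebra_simps)
    then have "max Ye 1 < - ln (norm q) / (2 * pi)" by (rule pos_less_divide_eq[THEN iffD2, rotated]) simp
    moreover have "Im (Ln q / (2 * pi * \<i>)) = - ln (norm q) / (2 * pi)" using Im_Ln_div[of q] q by blast
    ultimately have "Im (Ln q / (2 * pi * \<i>)) > Ye" using max.cobounded1[of Ye 1] by linarith
    then show "dist (qf q) 0 < e" using Ye by (simp add: qf_def)
  qed
  then show "\<forall>\<^sub>F q in at 0. dist (qf q) 0 < e" unfolding eventually_at using d0 by blast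
qed

lemma f_decay: "\<exists>C Y. C > 0 \<and> Y > 0 \<and> (\<forall>w. Im w > Y \<longrightarrow> norm (f w) \<le> C * exp (- 2 * pi * Im w))"
proof -
  obtain Y0 where Y0: "\<forall>w. Im w > Y0 \<longrightarrow> norm (f w) < 1" using f_to_zero[of 1] by auto
  define Y where "Y = max Y0 1"
  define r where "r = exp (- 2 * pi * Y)"
  have r0: "r > 0" by (simp add: r_def)
  have r1: "r < 1" unfolding r_def Y_def by simp
  define G where "G = (\<lambda>q. if q = 0 then 0 else qf q)"
  have Ghol: "G holomorphic_on ball 0 1"
    unfolding G_def by (rule removable_singularity) (use qf_hol qf_lim in auto)
  define F where "F = (\<lambda>\<xi>::complex. G (of_real r * \<xi>))"
  have Fhol: "F holomorphic_on ball 0 1"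
  proof -
    have "(\<lambda>\<xi>::complex. of_real r * \<xi>) holomorphic_on ball 0 1" by (intro holomorphic_intros)
    moreover have "(\<lambda>\<xi>::complex. of_real r * \<xi>) ` ball 0 1 \<subseteq> ball 0 1"
    proof (rule image_subsetI)
      fix \<xi> :: complex assume "\<xi> \<in> ball 0 1"
      then have xi: "norm \<xi> < 1" by simp
      have "norm (of_real r * \<xi>) = r * norm \<xi>" using r0 by (simp add: norm_mult)
      also have "\<dots> \<le> 1 * norm \<xi>" using r1 by (intro mult_right_mono) auto
      finally show "of_real r * \<xi> \<in> ball 0 1" using xi by simp
    qed
    ultimately have "(G \<circ> (\<lambda>\<xi>::complex. of_real r * \<xi>)) holomorphic_on ball 0 1"
      using Ghol holomorphic_on_compose_gen by blast
    then show ?thesis by (simp add: F_def o_def)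
  qed
  have F0: "F 0 = 0" by (simp add: F_def G_def)
  have Fb: "norm (F \<xi>) < 1" if "norm \<xi> < 1" for \<xi>
  proof (cases "\<xi> = 0")
    case True then show ?thesis by (simp add: F0)
  next
    case False
    define q where "q = of_real r * \<xi>"
    have qnz: "q \<noteq> 0" using False r0 by (simp add: q_def)
    have "norm q < r" using that r0 by (simp add: q_def norm_mult)
    then have "ln (norm q) < ln r" using qnz r0 by simp
    then have "Y * (2 * pi) < - ln (norm q)" by (simp add: r_def algebra_simps)
    then have "Y < - ln (norm q) / (2 * pi)" by (rule pos_less_divide_eq[THEN iffD2, rotated]) simp
    then have "Im (Ln q / (2 * pi * \<i>)) > Y0" using Im_Ln_div[OF qnz] by (simp add: Y_def)
    then show ?thesis using Y0 qnz by (simp add: F_def G_def qf_def q_def[symmetric])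
  qed
  have main: "norm (f w) \<le> (1 / r) * exp (- 2 * pi * Im w)" if w: "Im w > Y" for w
  proof -
    define q where "q = exp (2 * pi * \<i> * w)"
    have qnz: "q \<noteq> 0" by (simp add: q_def)
    have nq: "norm q = exp (- 2 * pi * Im w)" unfolding q_def by (rule norm_exp_2pii)
    have "norm q < r" unfolding nq r_def using w by simp
    define \<xi> where "\<xi> = q / of_real r"
    have nxi: "norm \<xi> < 1" using \<open>norm q < r\<close> r0 by (simp add: \<xi>_def norm_divide)
    have "norm (F \<xi>) \<le> norm \<xi>" by (rule Schwarz_Lemma(1)[OF Fhol F0 Fb nxi]) simp
    moreover have "F \<xi> = f w"
    proof -
      have "F \<xi> = qf q" using r0 qnz by (simp add: F_def G_def \<xi>_def)
      also have "\<dots> = f w" unfolding qf_def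
      proof (rule f_same_exp)
        have "- ln (norm q) / (2 * pi) = Im w" using nq by simp
        then show "Im (Ln q / (2 * pi * \<i>)) > 0" using Im_Ln_div[OF qnz] w unfolding Y_def by simp
        show "Im w > 0" using w unfolding Y_def by simp
        show "exp (2 * pi * \<i> * (Ln q / (2 * pi * \<i>))) = exp (2 * pi * \<i> * w)"
          using exp_Ln_div[OF qnz] by (simp add: q_def)
      qed
      finally show ?thesis .
    qed
    ultimately have "norm (f w) \<le> norm q / r" using r0 by (simp add: \<xi>_def norm_divide)
    then show ?thesis using nq by simp
  qed
  show ?thesis
    by (rule exI[of _ "1/r"], rule exI[of _ Y]) (use r0 main in \<open>auto simp: Y_def\<close>)
qed

end

lemma si_exp_tail:
  fixes h :: "real \<Rightarrow> complex"
  assumes cont: "continuous_on {c..} h" and a: "a > 0"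
    and bnd: "\<And>t. t \<ge> T \<Longrightarrow> norm (h t) \<le> B * exp (- a * t)"
  shows "set_integrable lborel {c..} h"
proof -
  define T' where "T' = max c T"
  have eq: "{c..} = {c..T'} \<union> {T'..}" by (auto simp: T'_def)
  have i1: "set_integrable lborel {c..T'} h"
    by (rule borel_integrable_atLeastAtMost') (rule continuous_on_subset[OF cont], auto)
  have "(\<lambda>x. exp (- a * x)) integrable_on {T'..}" using integrable_on_exp_minus_to_infinity[OF a] by blast
  then have "set_integrable lebesgue {T'..} (\<lambda>x. exp (- a * x))"
    by (intro nonnegative_absolutely_integrable_1) auto
  then have "set_integrable lborel {T'..} (\<lambda>x. exp (- a * x))"
    unfolding set_integrable_def by (subst (asm) integrable_completion) measurable
  then have ie: "set_integrable lborel {T'..} (\<lambda>x. B * exp (- a * x))"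
    by (rule set_integrable_mult_right)
  have meas: "set_borel_measurable lborel {T'..} h"
  proof -
    have "continuous_on {T'..} h" by (rule continuous_on_subset[OF cont]) (auto simp: T'_def)
    then have "set_borel_measurable borel {T'..} h" by (intro set_measurable_continuous_on) auto
    then show ?thesis by (simp add: set_borel_measurable_def)
  qed
  have i2: "set_integrable lborel {T'..} h"
  proof (rule set_integrable_bound[OF ie meas])
    show "AE x in lborel. x \<in> {T'..} \<longrightarrow> norm (h x) \<le> norm (B * exp (- a * x))"
    proof (rule AE_I2, rule impI)
      fix x assume "x \<in> {T'..}"
      then have "norm (h x) \<le> B * exp (- a * x)" using bnd by (auto simp: T'_def)
      also have "\<dots> \<le> norm (B * exp (- a * x))" by simp
      finally show "norm (h x) \<le> norm (B * exp (- a * x))" .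
    qed
  qed
  show ?thesis unfolding eq by (rule set_integrable_Un[OF i1 i2]) auto
qed

lemma si_zero_bounded:
  fixes h :: "real \<Rightarrow> complex"
  assumes cont: "continuous_on {0<..c} h" and c: "c > 0"
    and ev: "eventually (\<lambda>t. norm (h t) \<le> 1) (at_right 0)"
  shows "set_integrable lborel {0<..c} h"
proof -
  obtain \<delta> where d: "\<delta> > 0" "\<And>t. t > 0 \<Longrightarrow> t < \<delta> \<Longrightarrow> norm (h t) \<le> 1"
    using ev unfolding eventually_at_right_field by auto
  define d' where "d' = min \<delta> c / 2"
  have d'0: "d' > 0" "d' < \<delta>" "d' < c" using d c by (auto simp: d'_def)
  have eq: "{0<..c} = {0<..d'} \<union> {d'..c}" using d'0 by auto
  have i1: "set_integrable lborel {d'..c} h"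
    by (rule borel_integrable_atLeastAtMost') (rule continuous_on_subset[OF cont], use d'0 in auto)
  have "set_integrable lborel {0..d'} (\<lambda>x. 1::real)"
    by (rule borel_integrable_atLeastAtMost') simp
  then have ic: "set_integrable lborel {0<..d'} (\<lambda>x. 1::real)"
    by (rule set_integrable_subset) auto
  have meas: "set_borel_measurable lborel {0<..d'} h"
  proof -
    have "continuous_on {0<..d'} h" by (rule continuous_on_subset[OF cont]) (use d'0 in auto)
    then have "set_borel_measurable borel {0<..d'} h" by (intro set_measurable_continuous_on) auto
    then show ?thesis by (simp add: set_borel_measurable_def)
  qed
  have i2: "set_integrable lborel {0<..d'} h"
  proof (rule set_integrable_bound[OF ic meas])
    show "AE x in lborel. x \<in> {0<..d'} \<longrightarrow> norm (h x) \<le> norm (1::real)"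
      using d d'0 by (intro AE_I2) auto
  qed
  show ?thesis unfolding eq by (rule set_integrable_Un[OF i2 i1]) auto
qed

lemma ftc_interval:
  fixes F h :: "real \<Rightarrow> complex"
  assumes "c \<le> d" and der: "\<And>t. t \<in> {c..d} \<Longrightarrow> (F has_vector_derivative h t) (at t)"
    and cont: "continuous_on {c..d} h"
  shows "(LBINT t:{c..d}. h t) = F d - F c"
proof -
  have "(LBINT t=c..d. h t) = F d - F c"
    by (rule interval_integral_FTC_finite) (use assms in \<open>auto simp: min_def max_def intro: has_vector_derivative_at_within\<close>)
  then show ?thesis using assms(1) by (simp add: interval_integral_Icc)
qed

lemma ftc_top:
  fixes F h :: "real \<Rightarrow> complex"
  assumes der: "\<And>t. t \<ge> c \<Longrightarrow> (F has_vector_derivative h t) (at t)"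
    and cont: "continuous_on {c..} h" and int: "set_integrable lborel {c..} h"
  shows "(F \<longlongrightarrow> F c + (LBINT t:{c..}. h t)) at_top"
proof -
  have lim: "((\<lambda>b. LBINT t:{c..b}. h t) \<longlongrightarrow> (LBINT t:{c..}. h t)) at_top"
    by (rule tendsto_set_lebesgue_integral_at_top[OF _ int]) auto
  have ev: "eventually (\<lambda>b. F c + (LBINT t:{c..b}. h t) = F b) at_top"
  proof (rule eventually_at_top_linorderI[of c])
    fix b assume "b \<ge> c"
    then have "(LBINT t:{c..b}. h t) = F b - F c"
      by (intro ftc_interval der) (auto intro: continuous_on_subset[OF cont])
    then show "F c + (LBINT t:{c..b}. h t) = F b" by simp
  qed
  show ?thesis by (rule Lim_transform_eventually[OF tendsto_add[OF tendsto_const lim] ev])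
qed

lemma ftc_right0:
  fixes F h :: "real \<Rightarrow> complex"
  assumes c: "c > 0" and der: "\<And>t. t \<in> {0<..c} \<Longrightarrow> (F has_vector_derivative h t) (at t)"
    and cont: "continuous_on {0<..c} h" and int: "set_integrable lborel {0<..c} h"
  shows "(F \<longlongrightarrow> F c - (LBINT t:{0<..c}. h t)) (at_right 0)"
proof -
  have lim: "((\<lambda>a. LBINT t:{a..c}. h t) \<longlongrightarrow> (LBINT t:{0<..c}. h t)) (at_right 0)"
    by (rule tendsto_set_lebesgue_integral_at_right[OF c _ int]) auto
  have ev: "eventually (\<lambda>a. F c - (LBINT t:{a..c}. h t) = F a) (at_right 0)"
    unfolding eventually_at_right_field
  proof (rule exI[of _ c], intro conjI allI impI)
    show "0 < c" by (rule c)
    fix a assume a: "0 < a" "a < c"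
    then have "(LBINT t:{a..c}. h t) = F c - F a"
      by (intro ftc_interval der) (auto intro: continuous_on_subset[OF cont])
    then show "F c - (LBINT t:{a..c}. h t) = F a" by simp
  qed
  show ?thesis by (rule Lim_transform_eventually[OF tendsto_diff[OF tendsto_const lim] ev])
qed

definition NF :: "real \<Rightarrow> real \<Rightarrow> real \<Rightarrow> complex \<Rightarrow> complex" where
  "NF p q r L = exp (complex_of_real p + complex_of_real q * L + complex_of_real r * \<i>)"

lemma NF_mult: "NF p q r L * NF p' q' r' L = NF (p + p') (q + q') (r + r') L"
  unfolding NF_def by (simp add: exp_add[symmetric] algebra_simps)

lemma NF_2pi: "NF p q (r - 2 * pi) L = NF p q r L"
proof -
  have "NF p q (r - 2 * pi) L = NF p q r L * exp (- (2 * pi * \<i>))"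
    unfolding NF_def by (simp add: exp_add[symmetric] algebra_simps)
  also have "exp (- (2 * pi * \<i>)) = 1" by (simp add: exp_minus)
  finally show ?thesis by simp
qed

lemma NF_cong: "p = p' \<Longrightarrow> q = q' \<Longrightarrow> r = r' \<Longrightarrow> NF p q r L = NF p' q' r' L" by simp

lemma powr_via_exp: "- pi < Im E \<Longrightarrow> Im E \<le> pi \<Longrightarrow> x = exp E \<Longrightarrow> x powr c = exp (E * c)"
  using exp_powr_complex by simp

context
  fixes s :: complex and N :: nat
  assumes s: "Im s > 0" and N: "N > 0"
begin

abbreviation "L \<equiv> Ln s"
abbreviation "lnN \<equiv> ln (real N)"

lemma s_nz: "s \<noteq> 0" using s by auto
lemma ImL: "0 < Im L" "Im L < pi" using Im_Ln_pos_lt_imp[OF s] by auto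
lemma exp_ell: "exp (complex_of_real lnN) = of_nat N" using N by (simp add: exp_of_real)

lemma cv1: "s powr (complex_of_real c) = NF 0 c 0 L"
  using s_nz unfolding NF_def powr_def by (simp add: mult.commute)

lemma cv2: "(- of_nat N * s) powr (complex_of_real c) = NF (c * lnN) c (- c * pi) L"
proof -
  have "(- of_nat N * s) powr (complex_of_real c) = exp ((of_real lnN + L - of_real pi * \<i>) * of_real c)"
  proof (rule powr_via_exp)
    show "- pi < Im (of_real lnN + L - of_real pi * \<i>)" "Im (of_real lnN + L - of_real pi * \<i>) \<le> pi"
      using ImL by auto
    show "- of_nat N * s = exp (of_real lnN + L - of_real pi * \<i>)"
      using s_nz exp_ell by (simp add: exp_add exp_diff exp_minus)
  qed
  then show ?thesis unfolding NF_def by (simp add: algebra_simps)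
qed

lemma cv3: "(- 1 / (of_nat N * s)) powr (complex_of_real c) = NF (- c * lnN) (- c) (c * pi) L"
proof -
  have "(- 1 / (of_nat N * s)) powr (complex_of_real c) = exp ((- of_real lnN - L + of_real pi * \<i>) * of_real c)"
  proof (rule powr_via_exp)
    show "- pi < Im (- of_real lnN - L + of_real pi * \<i>)" "Im (- of_real lnN - L + of_real pi * \<i>) \<le> pi"
      using ImL by auto
    show "- 1 / (of_nat N * s) = exp (- of_real lnN - L + of_real pi * \<i>)"
      using s_nz exp_ell N by (simp add: exp_add exp_diff exp_minus field_simps)
  qed
  then show ?thesis unfolding NF_def by (simp add: algebra_simps)
qed

lemma cv4: "(- of_nat N * (- 1 / (of_nat N * s))) powr (complex_of_real c) = NF 0 (- c) 0 L"
proof -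
  have "(- of_nat N * (- 1 / (of_nat N * s))) powr (complex_of_real c) = exp ((- L) * of_real c)"
  proof (rule powr_via_exp)
    show "- pi < Im (- L)" "Im (- L) \<le> pi" using ImL by auto
    show "- of_nat N * (- 1 / (of_nat N * s)) = exp (- L)"
      using s_nz N by (simp add: exp_minus field_simps)
  qed
  then show ?thesis unfolding NF_def by (simp add: algebra_simps)
qed

lemma sqrt_exp: "complex_of_real (sqrt (real N)) = exp (complex_of_real (lnN / 2))"
proof -
  have "sqrt (real N) = exp (lnN / 2)"
    using N by (simp add: powr_half_sqrt[symmetric] powr_def)
  then show ?thesis by (simp add: exp_of_real[symmetric])
qed

lemma cv5: "(- \<i> * of_real (sqrt (real N)) * s) powr (complex_of_real c) = NF (c * lnN / 2) c (- c * pi / 2) L"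
proof -
  have "(- \<i> * of_real (sqrt (real N)) * s) powr (complex_of_real c) = exp ((of_real (lnN / 2) + L - of_real (pi/2) * \<i>) * of_real c)"
  proof (rule powr_via_exp)
    show "- pi < Im (of_real (lnN / 2) + L - of_real (pi/2) * \<i>)" "Im (of_real (lnN / 2) + L - of_real (pi/2) * \<i>) \<le> pi"
      using ImL by auto
    have "exp (- (of_real (pi/2) * \<i>)) = - \<i>"
      by (simp add: exp_minus) (simp add: exp_eq_polar cis_conv_exp[symmetric])
    have "exp (of_real (lnN / 2) + L - of_real (pi/2) * \<i>) = exp (of_real (lnN / 2)) * exp L * exp (- (of_real (pi/2) * \<i>))"
      by (simp only: diff_conv_add_uminus exp_add)
    also have "\<dots> = of_real (sqrt (real N)) * s * (- \<i>)" using s_nz by (simp only: sqrt_exp[symmetric] exp_Ln[OF s_nz] \<open>exp (- (of_real (pi/2) * \<i>)) = - \<i>\<close>)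
    finally show "- \<i> * of_real (sqrt (real N)) * s = exp (of_real (lnN / 2) + L - of_real (pi/2) * \<i>)"
      by simp
  qed
  then show ?thesis unfolding NF_def by (simp add: algebra_simps)
qed

lemma cv6: "\<i> powr (complex_of_real c) = NF 0 0 (c * pi / 2) L"
  unfolding NF_def powr_def by (simp add: Ln_ii algebra_simps)

lemma cv7: "complex_of_real (real N powr x) = NF (x * lnN) 0 0 L"
  using N unfolding NF_def powr_def by (simp add: exp_of_real[symmetric] algebra_simps)

lemma cv7inv: "1 / complex_of_real (real N powr x) = NF (- x * lnN) 0 0 L"
  using N unfolding NF_def powr_def by (simp add: exp_of_real[symmetric] exp_minus algebra_simps divide_inverse)

lemma cv8: "\<i> ^ n = NF 0 0 (real n * pi / 2) L"
proof -
  have "\<i> = exp (of_real (pi / 2) * \<i>)" by (simp add: exp_eq_polar cis_conv_exp[symmetric])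
  then have "\<i> ^ n = exp (of_nat n * (of_real (pi / 2) * \<i>))" by (metis exp_of_nat_mult)
  then show ?thesis unfolding NF_def by (simp add: algebra_simps)
qed

lemma cv8m: "(- \<i>) ^ n = NF 0 0 (- real n * pi / 2) L"
proof -
  have "- \<i> = exp (of_real (- pi / 2) * \<i>)" by (simp add: exp_eq_polar cis_conv_exp[symmetric])
  then have "(- \<i>) ^ n = exp (of_nat n * (of_real (- pi / 2) * \<i>))" by (metis exp_of_nat_mult)
  then show ?thesis unfolding NF_def by (simp add: algebra_simps)
qed

lemma cv9: "of_nat N ^ n = NF (real n * lnN) 0 0 L"
proof -
  have "(of_nat N :: complex) ^ n = exp (of_nat n * of_real lnN)" by (metis exp_ell exp_of_nat_mult)
  then show ?thesis unfolding NF_def by (simp add: algebra_simps)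
qed

lemma cv9s: "complex_of_real (sqrt (real N)) ^ n = NF (real n * lnN / 2) 0 0 L"
proof -
  have "complex_of_real (sqrt (real N)) ^ n = exp (of_nat n * of_real (lnN / 2))" by (metis sqrt_exp exp_of_nat_mult)
  then show ?thesis unfolding NF_def by (simp add: algebra_simps)
qed

lemma cv10: "1 / (of_nat N * s ^ 2) = NF (- lnN) (- 2) 0 L"
proof -
  have "exp (of_nat 2 * L) = exp L ^ 2" by (rule exp_of_nat_mult)
  then have e2: "exp (2 * L) = s ^ 2" using s_nz by simp
  have "NF (- lnN) (- 2) 0 L = exp (- of_real lnN) * exp (- (2 * L))"
    unfolding NF_def by (simp add: exp_add[symmetric])
  also have "\<dots> = 1 / of_nat N * (1 / s ^ 2)" by (simp only: exp_minus e2 exp_ell) (simp add: divide_inverse)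
  finally show ?thesis by simp
qed

end

lemma NF_inv: "1 / NF p q r X = NF (- p) (- q) (- r) X"
  unfolding NF_def by (simp add: exp_minus[symmetric] divide_inverse algebra_simps)

definition al :: "real \<Rightarrow> nat \<Rightarrow> real \<Rightarrow> nat \<Rightarrow> complex \<Rightarrow> complex \<Rightarrow> complex" where
  "al k N a n z w = of_real (gbinom (k - 2) (real n)) * (\<i> * of_nat N * z) ^ n * w powr (of_real (a - real n))"
definition be :: "real \<Rightarrow> nat \<Rightarrow> real \<Rightarrow> nat \<Rightarrow> complex \<Rightarrow> complex \<Rightarrow> complex" where
  "be k N a n z w = \<i> powr (of_real k) / of_real (real N powr (1/4)) * of_real (gbinom (k - 2) (real n + 1/2))
      * (\<i> * z) ^ n * (- of_nat N * w) powr (of_real (2 * k - 9/2 - a - real n))"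

lemma Phi_eq: "Phi k N a z w = (\<Sum>n = 0..nat \<lfloor>k - 5/2\<rfloor>. al k N a n z w + be k N a n z w)"
  by (simp add: Phi_def al_def be_def)

lemma gb1: assumes "n \<le> m" "real m = k - 5/2"
  shows "gbinom (k - 2) (real (m - n) + 1/2) = gbinom (k - 2) (real n)"
proof -
  have e1: "real (m - n) + 1/2 + 1 = k - 2 - real n + 1" using assms by (simp add: of_nat_diff)
  have e2: "k - 2 - (real (m - n) + 1/2) + 1 = real n + 1" using assms by (simp add: of_nat_diff)
  show ?thesis unfolding gbinom_def e1 e2 by (simp add: mult.commute)
qed

lemma gb2: assumes "n \<le> m" "real m = k - 5/2"
  shows "gbinom (k - 2) (real (m - n)) = gbinom (k - 2) (real n + 1/2)"
proof -
  have e1: "real (m - n) + 1 = k - 2 - (real n + 1/2) + 1" using assms by (simp add: of_nat_diff)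
  have e2: "k - 2 - real (m - n) + 1 = real n + 1/2 + 1" using assms by (simp add: of_nat_diff)
  show ?thesis unfolding gbinom_def e1 e2 by (simp add: mult.commute)
qed

lemma alg1:
  fixes z Nc sq P5 P3 A s :: complex
  assumes "z \<noteq> 0" "Nc \<noteq> 0" "n \<le> m"
  shows "\<i>^m * (sq*z)^m * P5 / (Nc * s^2) * (A * (\<i>*Nc*(-1/(Nc*z)))^n * P3)
       = A * z^(m-n) * (\<i>^m * sq^m * P5 * (1 / (Nc * s ^ 2)) * (-\<i>)^n * P3)"
proof -
  have e: "\<i>*Nc*(-1/(Nc*z)) = -\<i>/z" using assms by (simp add: field_simps)
  have zm: "z^m = z^(m-n) * z^n" using assms(3) by (simp add: power_add[symmetric])
  have zm2: "(sq*z)^m = sq^m * z^(m-n) * z^n" by (simp add: power_mult_distrib zm)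
  have e2: "(-\<i>/z)^n = (-\<i>)^n / z^n" by (rule power_divide)
  show ?thesis unfolding e zm2 e2 using assms by (simp add: field_simps)
qed

lemma alg2:
  fixes z Nc sq P5 P6 P7 P4 B s :: complex
  assumes "z \<noteq> 0" "Nc \<noteq> 0" "n \<le> m"
  shows "\<i>^m * (sq*z)^m * P5 / (Nc * s^2) * (P6 / P7 * B * (\<i>*(-1/(Nc*z)))^n * P4)
       = B * z^(m-n) * (\<i>^m * sq^m * P5 * (1 / (Nc * s ^ 2)) * P6 * (1/P7) * (-\<i>)^n * (1/Nc^n) * P4)"
proof -
  have e: "\<i>*(-1/(Nc*z)) = -\<i>/(Nc*z)" using assms by (simp add: field_simps)
  have zm: "z^m = z^(m-n) * z^n" using assms(3) by (simp add: power_add[symmetric])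
  have zm2: "(sq*z)^m = sq^m * z^(m-n) * z^n" by (simp add: power_mult_distrib zm)
  have e2: "(-\<i>/(Nc*z))^n = (-\<i>)^n / (Nc^n * z^n)" by (metis power_divide power_mult_distrib)
  show ?thesis unfolding e zm2 e2 using assms by (simp add: field_simps)
qed

context
  fixes k :: real and N :: nat and a :: real and m :: nat and z s :: complex
  assumes N: "N > 0" and z: "Im z > 0" and s: "Im s > 0" and hm: "real m = k - 5/2"
begin

definition "Ck = \<i>^m * (of_real (sqrt (real N)) * z)^m * (- \<i> * of_real (sqrt (real N)) * s) powr (of_real k) / (of_nat N * s^2)"

lemma T1: assumes n: "n \<le> m"
  shows "Ck * al k N a n (- 1 / (of_nat N * z)) (- 1 / (of_nat N * s)) = be k N a (m - n) z s"
proof -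
  have zn: "z \<noteq> 0" using z by auto
  have Nn: "(of_nat N :: complex) \<noteq> 0" using N by simp
  have "Ck * al k N a n (- 1 / (of_nat N * z)) (- 1 / (of_nat N * s))
     = of_real (gbinom (k - 2) (real n)) * z^(m-n) *
       (\<i>^m * of_real (sqrt (real N))^m * (- \<i> * of_real (sqrt (real N)) * s) powr (of_real k) * (1 / (of_nat N * s ^ 2))
        * (-\<i>)^n * (- 1 / (of_nat N * s)) powr (of_real (a - real n)))"
    unfolding Ck_def al_def by (rule alg1[OF zn Nn n])
  also have "(\<i>^m * of_real (sqrt (real N))^m * (- \<i> * of_real (sqrt (real N)) * s) powr (of_real k) * (1 / (of_nat N * s ^ 2))
        * (-\<i>)^n * (- 1 / (of_nat N * s)) powr (of_real (a - real n)))
     = (\<i> powr (of_real k) * (1 / of_real (real N powr (1/4))) * \<i> ^ (m - n) *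
          (- of_nat N * s) powr (of_real (2 * k - 9/2 - a - real (m - n))))"
    apply (simp only: cv8[OF s N] cv9s[OF s N] cv5[OF s N] cv10[OF s N] cv8m[OF s N] cv3[OF s N]
       cv6[OF s N] cv7inv[OF s N] cv2[OF s N] NF_mult)
    apply (rule trans[OF NF_cong NF_2pi])
    using n by (simp_all add: hm of_nat_diff field_simps)
  also have "of_real (gbinom (k - 2) (real n)) * z^(m-n) * (\<i> powr (of_real k) * (1 / of_real (real N powr (1/4))) * \<i> ^ (m - n) *
          (- of_nat N * s) powr (of_real (2 * k - 9/2 - a - real (m - n)))) = be k N a (m - n) z s"
    unfolding be_def gb1[OF n hm] by (simp add: power_mult_distrib)
  finally show ?thesis .
qed

lemma T2: assumes n: "n \<le> m"
  shows "Ck * be k N a n (- 1 / (of_nat N * z)) (- 1 / (of_nat N * s)) = al k N a (m - n) z s"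
proof -
  have zn: "z \<noteq> 0" using z by auto
  have Nn: "(of_nat N :: complex) \<noteq> 0" using N by simp
  have "Ck * be k N a n (- 1 / (of_nat N * z)) (- 1 / (of_nat N * s))
     = of_real (gbinom (k - 2) (real n + 1/2)) * z^(m-n) *
       (\<i>^m * of_real (sqrt (real N))^m * (- \<i> * of_real (sqrt (real N)) * s) powr (of_real k) * (1 / (of_nat N * s ^ 2))
        * \<i> powr (of_real k) * (1 / of_real (real N powr (1/4))) * (-\<i>)^n * (1 / of_nat N ^ n)
        * (- of_nat N * (- 1 / (of_nat N * s))) powr (of_real (2 * k - 9/2 - a - real n)))"
    unfolding Ck_def be_def by (rule alg2[OF zn Nn n])
  also have "(\<i>^m * of_real (sqrt (real N))^m * (- \<i> * of_real (sqrt (real N)) * s) powr (of_real k) * (1 / (of_nat N * s ^ 2))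
        * \<i> powr (of_real k) * (1 / of_real (real N powr (1/4))) * (-\<i>)^n * (1 / of_nat N ^ n)
        * (- of_nat N * (- 1 / (of_nat N * s))) powr (of_real (2 * k - 9/2 - a - real n)))
     = \<i> ^ (m - n) * of_nat N ^ (m - n) * s powr (of_real (a - real (m - n)))"
    apply (simp only: cv8[OF s N] cv9s[OF s N] cv5[OF s N] cv10[OF s N] cv8m[OF s N] cv4[OF s N]
       cv6[OF s N] cv7inv[OF s N] cv9[OF s N] cv1[OF s N] NF_inv NF_mult)
    apply (rule NF_cong)
    using n by (simp_all add: hm of_nat_diff field_simps)
  also have "of_real (gbinom (k - 2) (real n + 1/2)) * z^(m-n) * (\<i> ^ (m - n) * of_nat N ^ (m - n) * s powr (of_real (a - real (m - n))))
     = al k N a (m - n) z s"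
    unfolding al_def gb2[OF n hm, symmetric] by (simp add: power_mult_distrib)
  finally show ?thesis .
qed

end

lemma norm_powr_real: "norm (x powr (complex_of_real c)) = norm x powr c"
  by (simp add: norm_powr_complex)

lemma Im_nonpos: "Im w > 0 \<Longrightarrow> w \<notin> \<real>\<^sub>\<le>\<^sub>0" by (auto simp: complex_nonpos_Reals_iff)

locale cf2 = cf +
  fixes a :: real
  assumes a_lo: "0 \<le> a" and a_hi: "a \<le> 2 * k - 9/2"
begin

definition "m = nat \<lfloor>k - 5/2\<rfloor>"

lemma m_real: "real m = k - 5/2"
proof -
  obtain j :: int where j: "k - 1/2 = of_int j" using k_half by (auto elim: Ints_cases)
  have e: "k - 5/2 = of_int (j - 2)" using j by simp
  have "j - 2 \<ge> 0" using k_gt e by linarith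
  then show ?thesis unfolding m_def e by simp
qed

lemma Phi_hol: "(\<lambda>w. Phi k N a z w) holomorphic_on {w. Im w > 0}"
  unfolding Phi_def
proof (intro holomorphic_intros)
  fix n w assume "w \<in> {w. Im w > 0}"
  then have "Im w > 0" by simp
  then show "w \<notin> \<real>\<^sub>\<le>\<^sub>0" "- of_nat N * w \<notin> \<real>\<^sub>\<le>\<^sub>0"
    using N_pos by (auto simp: complex_nonpos_Reals_iff)
qed

lemma Phi_bound: "\<exists>B. \<forall>w. Im w \<ge> 1 \<longrightarrow> norm (Phi k N a z w) \<le> B * norm w powr (2 * k)"
proof -
  define K1 where "K1 n = \<bar>gbinom (k - 2) (real n)\<bar> * norm (\<i> * of_nat N * z) ^ n" for n
  define K2 where "K2 n = norm (\<i> powr (of_real k) / of_real (real N powr (1/4))) * \<bar>gbinom (k - 2) (real n + 1/2)\<bar>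
      * norm (\<i> * z) ^ n * real N powr (2 * k)" for n
  have "norm (Phi k N a z w) \<le> (\<Sum>n = 0..nat \<lfloor>k - 5/2\<rfloor>. K1 n + K2 n) * norm w powr (2 * k)"
    if w: "Im w \<ge> 1" for w
  proof -
    have w1: "norm w \<ge> 1" using w abs_Im_le_cmod[of w] by linarith
    have N1: "real N \<ge> 1" using N_pos by simp
    have t1: "norm (of_real (gbinom (k - 2) (real n)) * (\<i> * of_nat N * z) ^ n * w powr (of_real (a - real n)))
          \<le> K1 n * norm w powr (2 * k)" for n
    proof -
      have "norm w powr (a - real n) \<le> norm w powr (2 * k)"
        using w1 a_hi k_gt by (intro powr_mono) auto
      moreover have "norm (of_real (gbinom (k - 2) (real n)) * (\<i> * of_nat N * z) ^ n * w powr (of_real (a - real n)))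
          = K1 n * norm w powr (a - real n)"
        unfolding K1_def by (simp only: norm_mult norm_power norm_powr_real norm_of_real)
      moreover have "K1 n \<ge> 0" unfolding K1_def by simp
      ultimately show ?thesis by (simp add: mult_left_mono)
    qed
    have t2: "norm (\<i> powr (of_real k) / of_real (real N powr (1/4)) * of_real (gbinom (k - 2) (real n + 1/2))
          * (\<i> * z) ^ n * (- of_nat N * w) powr (of_real (2 * k - 9/2 - a - real n)))
          \<le> K2 n * norm w powr (2 * k)" for n
    proof -
      have nw: "norm (- of_nat N * w) = real N * norm w" by (simp add: norm_mult)
      have "(real N * norm w) powr (2 * k - 9/2 - a - real n) \<le> (real N * norm w) powr (2 * k)"
        using w1 N1 a_lo by (intro powr_mono) (auto intro: order_trans[OF _ mult_mono[of 1 _ 1]])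
      also have "\<dots> = real N powr (2 * k) * norm w powr (2 * k)" by (simp add: powr_mult)
      finally have "norm ((- of_nat N * w) powr (of_real (2 * k - 9/2 - a - real n))) \<le> real N powr (2 * k) * norm w powr (2 * k)"
        by (simp only: norm_powr_real nw)
      moreover have "norm (\<i> powr (of_real k) / of_real (real N powr (1/4)) * of_real (gbinom (k - 2) (real n + 1/2))
          * (\<i> * z) ^ n * (- of_nat N * w) powr (of_real (2 * k - 9/2 - a - real n)))
        = (norm (\<i> powr (of_real k) / of_real (real N powr (1/4))) * \<bar>gbinom (k - 2) (real n + 1/2)\<bar>
      * norm (\<i> * z) ^ n) * norm ((- of_nat N * w) powr (of_real (2 * k - 9/2 - a - real n)))"
        by (simp only: norm_mult norm_power norm_of_real)
      moreover have "(norm (\<i> powr (of_real k) / of_real (real N powr (1/4))) * \<bar>gbinom (k - 2) (real n + 1/2)\<bar>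
      * norm (\<i> * z) ^ n) \<ge> 0" by simp
      ultimately show ?thesis unfolding K2_def
        by (metis (no_types, lifting) mult.assoc mult_left_mono)
    qed
    have "norm (Phi k N a z w) \<le> (\<Sum>n = 0..nat \<lfloor>k - 5/2\<rfloor>. (K1 n + K2 n) * norm w powr (2 * k))"
      unfolding Phi_def
      by (rule order_trans[OF norm_sum sum_mono], rule order_trans[OF norm_triangle_ineq])
         (use t1 t2 in \<open>simp add: distrib_right add_mono\<close>)
    then show ?thesis by (simp add: sum_distrib_right)
  qed
  then show ?thesis by blast
qed

end

lemma ra1: "\<alpha> > 0 \<Longrightarrow> \<beta> > 0 \<Longrightarrow> ((\<lambda>t::real. (\<alpha> / t) powr k * exp (- \<beta> / t) * t powr c) \<longlongrightarrow> 0) (at_right 0)"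
  by real_asymp

lemma ra2: "b \<ge> 0 \<Longrightarrow> (\<lambda>t::real. (b + t) powr c * exp (- 2 * pi * t)) \<in> o(\<lambda>t. exp (- pi * t))"
  by real_asymp

lemma ra3: "(\<lambda>t::real. t powr c * exp (- 2 * pi * t)) \<in> o(\<lambda>t. exp (- pi * t))"
  by real_asymp

context cf begin

lemma f_cont: "continuous_on {w. Im w > 0} f"
  using f_hol by (simp add: holomorphic_on_imp_continuous_on upper_half_plane_def)

lemma cont_axis: "continuous_on {0<..} (\<lambda>t. f (\<i> * of_real t))"
  by (rule continuous_on_compose2[OF f_cont]) (auto intro!: continuous_intros)

lemma f_axis_W: assumes t: "t > 0"
  shows "f (\<i> * of_real t) = of_real ((sqrt (real N) / real N / t) powr k) * f (\<i> * of_real (1 / (real N * t)))"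
proof -
  define w where "w = \<i> * of_real (1 / (real N * t))"
  have Iw: "Im w > 0" using t N_pos by (simp add: w_def)
  have e1: "- 1 / (of_nat N * w) = \<i> * of_real t" using t N_pos by (simp add: w_def field_simps)
  have e2: "- \<i> * of_real (sqrt (real N)) * w = of_real (sqrt (real N) / real N / t)"
    using t N_pos by (simp add: w_def field_simps)
  have "f (\<i> * of_real t) = (of_real (sqrt (real N) / real N / t)) powr (of_real k) * f w"
    using f_W[OF Iw] unfolding e1 e2 .
  also have "(of_real (sqrt (real N) / real N / t) :: complex) powr (of_real k) = of_real ((sqrt (real N) / real N / t) powr k)"
    using t N_pos by (subst powr_of_real) auto
  finally show ?thesis by (simp add: w_def)
qed

lemma int_fc: "set_integrable lborel {0<..} (\<lambda>t. f (\<i> * of_real t) * of_real (t powr c))"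
proof -
  obtain C Y where C: "C > 0" and Y: "Y > 0" and dec: "\<And>w. Im w > Y \<Longrightarrow> norm (f w) \<le> C * exp (- 2 * pi * Im w)"
    using f_decay by blast
  define h where "h t = f (\<i> * of_real t) * of_real (t powr c)" for t
  have cont: "continuous_on {0<..} h"
    unfolding h_def by (intro continuous_intros cont_axis) auto
  have ev1: "eventually (\<lambda>t. norm (h t) \<le> 1 * exp (- pi * t)) at_top"
  proof -
    have "eventually (\<lambda>t. norm (t powr c * exp (- 2 * pi * t)) \<le> (1 / C) * norm (exp (- pi * t))) at_top"
      using landau_o.smallD[OF ra3[of c], of "1/C"] C by simp
    moreover have "eventually (\<lambda>t::real. t > Y) at_top" by (rule eventually_gt_at_top)
    ultimately show ?thesis
    proof eventually_elim
      case (elim t)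
      have t0: "t > 0" using elim Y by simp
      have "norm (h t) = norm (f (\<i> * of_real t)) * t powr c" unfolding h_def using t0 by (simp add: norm_mult)
      also have "\<dots> \<le> C * exp (- 2 * pi * t) * t powr c"
        using dec[of "\<i> * of_real t"] elim by (intro mult_right_mono) auto
      also have "\<dots> = C * (t powr c * exp (- 2 * pi * t))" by simp
      also have "\<dots> \<le> C * ((1 / C) * exp (- pi * t))"
        using elim(1) C by (intro mult_left_mono) auto
      finally show ?case using C by simp
    qed
  qed
  then obtain T where T: "\<And>t. t \<ge> T \<Longrightarrow> norm (h t) \<le> 1 * exp (- pi * t)"
    unfolding eventually_at_top_linorder by blast
  have i1: "set_integrable lborel {1..} h"
    by (rule si_exp_tail[OF _ _ T]) (auto intro: continuous_on_subset[OF cont])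
  have ev0: "eventually (\<lambda>t. norm (h t) \<le> 1) (at_right 0)"
  proof -
    define \<alpha> where "\<alpha> = sqrt (real N) / real N"
    define \<beta> where "\<beta> = 2 * pi / real N"
    have ab: "\<alpha> > 0" "\<beta> > 0" using N_pos by (auto simp: \<alpha>_def \<beta>_def)
    have "((\<lambda>t. C * ((\<alpha> / t) powr k * exp (- \<beta> / t) * t powr c)) \<longlongrightarrow> C * 0) (at_right 0)"
      by (intro tendsto_mult tendsto_const ra1 ab)
    then have "eventually (\<lambda>t. C * ((\<alpha> / t) powr k * exp (- \<beta> / t) * t powr c) < 1) (at_right 0)"
      by (intro order_tendstoD) auto
    moreover have "eventually (\<lambda>t::real. t > 0 \<and> t < 1 / (real N * Y)) (at_right 0)"
      unfolding eventually_at_right_field using N_pos Y by (intro exI[of _ "1 / (real N * Y)"]) auto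
    ultimately show ?thesis
    proof eventually_elim
      case (elim t)
      have t0: "t > 0" and tY: "t < 1 / (real N * Y)" using elim by auto
      have Im1: "Im (\<i> * of_real (1 / (real N * t))) = 1 / (real N * t)" by simp
      have "Y < 1 / (real N * t)" using tY t0 N_pos Y by (simp add: field_simps)
      then have fb: "norm (f (\<i> * of_real (1 / (real N * t)))) \<le> C * exp (- \<beta> / t)"
        using dec[of "\<i> * of_real (1 / (real N * t))"] by (simp add: \<beta>_def field_simps)
      have "norm (h t) = (\<alpha> / t) powr k * norm (f (\<i> * of_real (1 / (real N * t)))) * t powr c"
        unfolding h_def f_axis_W[OF t0] \<alpha>_def using t0 by (simp add: norm_mult)
      also have "\<dots> \<le> (\<alpha> / t) powr k * (C * exp (- \<beta> / t)) * t powr c"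
        by (intro mult_right_mono mult_left_mono fb) auto
      also have "\<dots> = C * ((\<alpha> / t) powr k * exp (- \<beta> / t) * t powr c)" by simp
      finally show ?case using elim(1) by simp
    qed
  qed
  have i0: "set_integrable lborel {0<..1} h"
    by (rule si_zero_bounded[OF _ _ ev0]) (auto intro: continuous_on_subset[OF cont])
  have "{0<..} = {0<..1} \<union> {1::real..}" by auto
  then show ?thesis using set_integrable_Un[OF i0 i1] unfolding h_def by auto
qed

end

lemma set_integrable_sum_fin:
  fixes g :: "'i \<Rightarrow> real \<Rightarrow> complex"
  assumes "\<And>i. i \<in> I \<Longrightarrow> set_integrable M A (g i)"
  shows "set_integrable M A (\<lambda>x. \<Sum>i\<in>I. g i x)"
  using assms unfolding set_integrable_def by (simp add: scaleR_sum_right)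

lemma set_integral_sum_fin:
  fixes g :: "'i \<Rightarrow> real \<Rightarrow> complex"
  assumes "\<And>i. i \<in> I \<Longrightarrow> set_integrable M A (g i)"
  shows "(LINT x:A|M. (\<Sum>i\<in>I. g i x)) = (\<Sum>i\<in>I. LINT x:A|M. g i x)"
  using assms unfolding set_integrable_def set_lebesgue_integral_def
  by (simp add: scaleR_sum_right Bochner_Integration.integral_sum)

lemma powr_real_times:
  assumes "r > 0" "z \<noteq> 0"
  shows "(complex_of_real r * z) powr (complex_of_real c) = complex_of_real (r powr c) * z powr (complex_of_real c)"
proof -
  have "(complex_of_real r * z) powr (complex_of_real c) = exp (of_real c * (of_real (ln r) + Ln z))"
    using assms by (simp add: powr_def Ln_times_of_real Ln_of_real)
  also have "\<dots> = exp (of_real (c * ln r)) * exp (of_real c * Ln z)" by (simp add: exp_add[symmetric] algebra_simps)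
  also have "exp (of_real (c * ln r)) = complex_of_real (r powr c)"
    using assms by (simp only: exp_of_real) (simp add: powr_def)
  also have "exp (of_real c * Ln z) = z powr (complex_of_real c)"
    using assms by (simp add: powr_def)
  finally show ?thesis .
qed

lemma i_NF: "\<i> = NF 0 0 (pi / 2) X"
  unfolding NF_def by (simp add: exp_eq_polar cis_conv_exp[symmetric])

lemma mi_powr_NF: "(- \<i>) powr (complex_of_real c) = NF 0 0 (- c * pi / 2) X"
  unfolding NF_def powr_def by (simp add: algebra_simps)

context cf2 begin

definition "U1 n z = of_real (gbinom (k - 2) (real n)) * (\<i> * of_nat N * z) ^ n * \<i> powr (of_real (a - real n))"
definition "U2 n z = \<i> powr (of_real k) / of_real (real N powr (1/4)) * of_real (gbinom (k - 2) (real n + 1/2))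
      * (\<i> * z) ^ n * of_real (real N powr (2 * k - 9/2 - a - real n)) * (- \<i>) powr (of_real (2 * k - 9/2 - a - real n))"

lemma Phi_axis: assumes t: "t > 0"
  shows "Phi k N a z (\<i> * of_real t) = (\<Sum>n = 0..nat \<lfloor>k - 5/2\<rfloor>.
      U1 n z * of_real (t powr (a - real n)) + U2 n z * of_real (t powr (2 * k - 9/2 - a - real n)))"
proof -
  have e1: "(\<i> * of_real t) powr (of_real c) = of_real (t powr c) * \<i> powr (of_real c)" for c
    using powr_real_times[OF t, of \<i> c] by (simp add: mult.commute)
  have e2: "(- of_nat N * (\<i> * of_real t)) powr (of_real c) = of_real (real N powr c) * of_real (t powr c) * (- \<i>) powr (of_real c)" for c
  proof -
    have eq: "- of_nat N * (\<i> * of_real t) = complex_of_real (real N * t) * (- \<i>)" by simp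
    have "(- of_nat N * (\<i> * of_real t)) powr (of_real c) = of_real ((real N * t) powr c) * (- \<i>) powr (of_real c)"
      unfolding eq by (rule powr_real_times) (use t N_pos in auto)
    then show ?thesis using t N_pos by (simp add: powr_mult)
  qed
  show ?thesis unfolding Phi_def U1_def U2_def e1 e2
    by (intro sum.cong refl) (simp add: algebra_simps)
qed

lemma int_Pa_terms:
  "set_integrable lborel {0<..} (\<lambda>t. (U1 n z * \<i>) * (f (\<i> * of_real t) * of_real (t powr (a - real n))))"
  "set_integrable lborel {0<..} (\<lambda>t. (U2 n z * \<i>) * (f (\<i> * of_real t) * of_real (t powr (2 * k - 9/2 - a - real n))))"
  using int_fc by (auto intro: set_integrable_mult_right)

lemma Pa_integrand: assumes "t \<in> {0<..}"
  shows "f (\<i> * of_real t) * Phi k N a z (\<i> * of_real t) * \<i> = (\<Sum>n = 0..nat \<lfloor>k - 5/2\<rfloor>.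
     (U1 n z * \<i>) * (f (\<i> * of_real t) * of_real (t powr (a - real n))) +
     (U2 n z * \<i>) * (f (\<i> * of_real t) * of_real (t powr (2 * k - 9/2 - a - real n))))"
  using assms by (simp add: Phi_axis sum_distrib_left sum_distrib_right algebra_simps)

lemma Pa_integrable: "set_integrable lborel {0<..} (\<lambda>t. f (\<i> * of_real t) * Phi k N a z (\<i> * of_real t) * \<i>)"
proof -
  have "set_integrable lborel {0<..} (\<lambda>t. \<Sum>n = 0..nat \<lfloor>k - 5/2\<rfloor>.
     (U1 n z * \<i>) * (f (\<i> * of_real t) * of_real (t powr (a - real n))) +
     (U2 n z * \<i>) * (f (\<i> * of_real t) * of_real (t powr (2 * k - 9/2 - a - real n))))"
    by (intro set_integrable_sum_fin set_integral_add int_Pa_terms)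
  then show ?thesis
    by (rule set_integrable_cong[THEN iffD1, rotated -1]) (auto simp: Pa_integrand)
qed

lemma Lambda_eq: "(LBINT t:{0<..}. f (\<i> * of_real t) * of_real (t powr c)) = Lambda f (of_real (c + 1))"
  unfolding Lambda_def
proof (rule set_lebesgue_integral_cong, simp, intro allI impI)
  fix t :: real assume "t \<in> {0<..}"
  then have "t > 0" by simp
  then have "(complex_of_real t) powr (complex_of_real (c + 1) - 1) = of_real (t powr c)"
    by (subst powr_of_real[symmetric]) auto
  then show "f (\<i> * of_real t) * of_real (t powr c) = f (\<i> * of_real t) * (complex_of_real t) powr (complex_of_real (c + 1) - 1)"
    by simp
qed

lemma Pa_sum: "Pa k N a f z = (\<Sum>n = 0..nat \<lfloor>k - 5/2\<rfloor>.
     (U1 n z * \<i>) * Lambda f (of_real (a + 1 - real n)) +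
     (U2 n z * \<i>) * Lambda f (of_real (2 * k - 7/2 - a - real n)))"
proof -
  have "Pa k N a f z = (LBINT t:{0<..}. \<Sum>n = 0..nat \<lfloor>k - 5/2\<rfloor>.
     (U1 n z * \<i>) * (f (\<i> * of_real t) * of_real (t powr (a - real n))) +
     (U2 n z * \<i>) * (f (\<i> * of_real t) * of_real (t powr (2 * k - 9/2 - a - real n))))"
    unfolding Pa_def by (rule set_lebesgue_integral_cong) (auto simp: Pa_integrand)
  also have "\<dots> = (\<Sum>n = 0..nat \<lfloor>k - 5/2\<rfloor>. LBINT t:{0<..}.
     (U1 n z * \<i>) * (f (\<i> * of_real t) * of_real (t powr (a - real n))) +
     (U2 n z * \<i>) * (f (\<i> * of_real t) * of_real (t powr (2 * k - 9/2 - a - real n))))"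
    by (intro set_integral_sum_fin set_integral_add int_Pa_terms)
  also have "\<dots> = (\<Sum>n = 0..nat \<lfloor>k - 5/2\<rfloor>.
     (U1 n z * \<i>) * Lambda f (of_real (a - real n + 1)) +
     (U2 n z * \<i>) * Lambda f (of_real (2 * k - 9/2 - a - real n + 1)))"
    by (intro sum.cong refl) (simp add: set_integral_add int_Pa_terms Lambda_eq)
  also have "\<dots> = (\<Sum>n = 0..nat \<lfloor>k - 5/2\<rfloor>.
     (U1 n z * \<i>) * Lambda f (of_real (a + 1 - real n)) +
     (U2 n z * \<i>) * Lambda f (of_real (2 * k - 7/2 - a - real n)))"
    by (intro sum.cong refl) (simp add: algebra_simps)
  finally show ?thesis .
qed

end

context cf2 begin

lemma U1_coef: "U1 n z * \<i> = \<i> powr (of_real (a + 1)) * (of_real (gbinom (k - 2) (real n)) * of_nat N ^ n) * z ^ n"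
proof -
  have ii: "Im \<i> > 0" by simp
  have ph0: "\<i> ^ n * \<i> powr (of_real (a - real n)) * \<i> ^ 1 = \<i> powr (of_real (a + 1))"
    apply (simp only: cv8[OF ii N_pos] cv6[OF ii N_pos] NF_mult)
    by (rule NF_cong) (simp_all add: field_simps)
  have "U1 n z * \<i> = of_real (gbinom (k - 2) (real n)) * of_nat N ^ n * z ^ n * (\<i> ^ n * \<i> powr (of_real (a - real n)) * \<i>)"
    unfolding U1_def by (simp add: power_mult_distrib algebra_simps)
  then show ?thesis using ph0 by (simp add: algebra_simps)
qed

lemma U2_coef: "U2 n z * \<i> = \<i> powr (of_real (a + 1)) * (of_real (gbinom (k - 2) (real n + 1/2))
     * of_real (real N powr (2 * k - a - real n - 19/4)) * \<i> powr (of_real (2 * real n - k + 1/2))) * z ^ n"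
proof -
  have ii: "Im \<i> > 0" by simp
  have ph: "\<i> powr (of_real k) * (1 / of_real (real N powr (1/4))) * \<i> ^ n * of_real (real N powr (2 * k - 9/2 - a - real n))
      * (- \<i>) powr (of_real (2 * k - 9/2 - a - real n)) * \<i> ^ 1
     = \<i> powr (of_real (a + 1)) * of_real (real N powr (2 * k - a - real n - 19/4)) * \<i> powr (of_real (2 * real n - k + 1/2))"
    apply (simp only: cv8[OF ii N_pos] cv6[OF ii N_pos] cv7[OF ii N_pos] cv7inv[OF ii N_pos] mi_powr_NF[of _ "Ln \<i>"] NF_inv
       NF_mult)
    apply (rule sym, rule trans[OF NF_cong NF_2pi])
    by (simp_all add: field_simps)
  have "U2 n z * \<i> = of_real (gbinom (k - 2) (real n + 1/2)) * z ^ n * (\<i> powr (of_real k) * (1 / of_real (real N powr (1/4))) * \<i> ^ n * of_real (real N powr (2 * k - 9/2 - a - real n))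
      * (- \<i>) powr (of_real (2 * k - 9/2 - a - real n)) * \<i>)"
    unfolding U2_def by (simp add: power_mult_distrib algebra_simps)
  also have "\<dots> = of_real (gbinom (k - 2) (real n + 1/2)) * z ^ n * (\<i> powr (of_real (a + 1)) * of_real (real N powr (2 * k - a - real n - 19/4)) * \<i> powr (of_real (2 * real n - k + 1/2)))"
    by (simp only: ph[unfolded power_one_right])
  finally show ?thesis by (simp only: mult_ac)
qed

lemma Pa_formula: "Pa k N a f z =
        \<i> powr (of_real (a + 1)) *
        (\<Sum>n = 0..nat \<lfloor>k - 5/2\<rfloor>.
           (of_real (gbinom (k - 2) (real n)) * of_nat N ^ n
              * Lambda f (of_real (a + 1 - real n))
            + of_real (gbinom (k - 2) (real n + 1/2))
              * of_real (real N powr (2 * k - a - real n - 19/4))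
              * \<i> powr (of_real (2 * real n - k + 1/2))
              * Lambda f (of_real (2 * k - 7/2 - a - real n))) * z ^ n)"
proof -
  have g: "(P * X * Z) * L1 + (P * Y * Z) * L2 = P * ((X * L1 + Y * L2) * Z)" for P X Y Z L1 L2 :: complex
    by (simp add: algebra_simps)
  show ?thesis unfolding Pa_sum U1_coef U2_coef sum_distrib_left
    by (intro sum.cong refl g)
qed

lemma Pa_poly: "\<exists>p :: complex poly. degree p \<le> nat \<lfloor>k - 5/2\<rfloor> \<and> (\<forall>z. Pa k N a f z = poly p z)"
proof -
  define c where "c n = \<i> powr (of_real (a + 1)) *
           (of_real (gbinom (k - 2) (real n)) * of_nat N ^ n
              * Lambda f (of_real (a + 1 - real n))
            + of_real (gbinom (k - 2) (real n + 1/2))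
              * of_real (real N powr (2 * k - a - real n - 19/4))
              * \<i> powr (of_real (2 * real n - k + 1/2))
              * Lambda f (of_real (2 * k - 7/2 - a - real n)))" for n
  define p where "p = (\<Sum>n = 0..nat \<lfloor>k - 5/2\<rfloor>. Polynomial.monom (c n) n)"
  have "degree p \<le> nat \<lfloor>k - 5/2\<rfloor>" unfolding p_def
    by (rule degree_sum_le) (auto intro: order_trans[OF degree_monom_le])
  moreover have "Pa k N a f z = poly p z" for z
    unfolding Pa_formula p_def poly_sum poly_monom c_def sum_distrib_left by (simp only: mult.assoc)
  ultimately show ?thesis by blast
qed

end

lemma seg_prop:
  fixes z w :: complex
  assumes z: "Im z > 0" and T: "T > 0" and w: "w \<in> closed_segment (\<i> * of_real T) (z + \<i> * of_real T)"
  shows "Im w \<ge> T \<and> norm w \<le> norm z + T"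
proof -
  obtain u where u: "0 \<le> u" "u \<le> 1" and w: "w = (1 - u) *\<^sub>R (\<i> * of_real T) + u *\<^sub>R (z + \<i> * of_real T)"
    using w unfolding in_segment(1) by blast
  have w': "w = \<i> * of_real T + of_real u * z"
    unfolding w scaleR_conv_of_real by (simp add: algebra_simps)
  have "Im w = T + u * Im z" unfolding w' by simp
  moreover have "u * Im z \<ge> 0" using u z by simp
  moreover have "norm w \<le> norm (\<i> * of_real T) + norm (of_real u * z)"
    unfolding w' by (rule norm_triangle_ineq)
  moreover have "norm (\<i> * of_real T) = T" using T by (simp add: norm_mult)
  moreover have "norm (of_real u * z) = u * norm z" using u by (simp add: norm_mult)
  moreover have "u * norm z \<le> norm z" using u by (simp add: mult_left_le_one_le)
  ultimately show ?thesis by linarith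
qed

lemma ra4: "((\<lambda>t::real. (b + t) powr c * exp (- 2 * pi * t)) \<longlongrightarrow> 0) at_top"
  by real_asymp

lemma H_open: "open {w::complex. Im w > 0}" by (rule open_halfspace_Im_gt)
lemma H_convex: "convex {w::complex. Im w > 0}" by (rule convex_halfspace_Im_gt)

context cf2 begin

definition "gz z w = f w * Phi k N a z w"

lemma f_hol': "f holomorphic_on {w. Im w > 0}" using f_hol by (simp add: upper_half_plane_def)

lemma gz_hol: "gz z holomorphic_on {w. Im w > 0}"
proof -
  have "(\<lambda>w. f w * Phi k N a z w) holomorphic_on {w. Im w > 0}"
    by (rule holomorphic_on_mult[OF f_hol' Phi_hol])
  then show ?thesis by (simp add: gz_def[abs_def])
qed

lemma gz_cont: "continuous_on {w. Im w > 0} (gz z)"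
  by (rule holomorphic_on_imp_continuous_on[OF gz_hol])

lemma GG_ex: "\<exists>G. \<forall>z x. Im x > 0 \<longrightarrow> (G z has_field_derivative gz z x) (at x)"
proof -
  have "\<forall>z. \<exists>G. \<forall>x. Im x > 0 \<longrightarrow> (G has_field_derivative gz z x) (at x)"
  proof
    fix z
    obtain G where G: "\<And>x. x \<in> {w. Im w > 0} \<Longrightarrow> (G has_field_derivative gz z x) (at x within {w. Im w > 0})"
      using holomorphic_convex_primitive'[OF H_convex H_open gz_hol] by blast
    have "(G has_field_derivative gz z x) (at x)" if "Im x > 0" for x
      using G[of x] that at_within_open[OF _ H_open, of x] by simp
    then show "\<exists>G. \<forall>x. Im x > 0 \<longrightarrow> (G has_field_derivative gz z x) (at x)" by blast
  qed
  then show ?thesis by (rule choice)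
qed

definition "GG = (SOME G. \<forall>z x. Im x > 0 \<longrightarrow> (G z has_field_derivative gz z x) (at x))"

lemma GG_deriv: "Im x > 0 \<Longrightarrow> (GG z has_field_derivative gz z x) (at x)"
  using someI_ex[OF GG_ex] unfolding GG_def[symmetric] by blast

lemma gz_decay: "\<exists>C Y. C > 0 \<and> Y \<ge> 1 \<and> (\<forall>w. Im w > Y \<longrightarrow> norm (gz z w) \<le> C * exp (- 2 * pi * Im w) * norm w powr (2 * k))"
proof -
  obtain C Y where C: "C > 0" and Y: "Y > 0" and dec: "\<And>w. Im w > Y \<Longrightarrow> norm (f w) \<le> C * exp (- 2 * pi * Im w)"
    using f_decay by blast
  obtain B where B: "\<And>w. Im w \<ge> 1 \<Longrightarrow> norm (Phi k N a z w) \<le> B * norm w powr (2 * k)"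
    using Phi_bound[of z] by blast
  define B' where "B' = max B 0 + 1"
  have B': "B' > 0" by (simp add: B'_def)
  have "norm (gz z w) \<le> (C * B') * exp (- 2 * pi * Im w) * norm w powr (2 * k)" if w: "Im w > max Y 1" for w
  proof -
    have "norm (gz z w) = norm (f w) * norm (Phi k N a z w)" by (simp add: gz_def norm_mult)
    also have "\<dots> \<le> (C * exp (- 2 * pi * Im w)) * (B' * norm w powr (2 * k))"
    proof (rule mult_mono)
      show "norm (f w) \<le> C * exp (- 2 * pi * Im w)" using dec w by simp
      have "norm (Phi k N a z w) \<le> B * norm w powr (2 * k)" using B w by simp
      also have "\<dots> \<le> B' * norm w powr (2 * k)" unfolding B'_def by (intro mult_right_mono) auto
      finally show "norm (Phi k N a z w) \<le> B' * norm w powr (2 * k)" .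
    qed (use C in auto)
    finally show ?thesis by (simp add: mult_ac)
  qed
  then show ?thesis using C B' by (intro exI[of _ "C * B'"] exI[of _ "max Y 1"]) auto
qed

lemma gz_ray_ev: assumes s: "Im s \<ge> 0"
  shows "eventually (\<lambda>t. norm (gz z (s + \<i> * of_real t) * \<i>) \<le> 1 * exp (- pi * t)) at_top"
proof -
  obtain C Y where C: "C > 0" and Y: "Y \<ge> 1" and dec: "\<And>w. Im w > Y \<Longrightarrow> norm (gz z w) \<le> C * exp (- 2 * pi * Im w) * norm w powr (2 * k)"
    using gz_decay[of z] by blast
  have "eventually (\<lambda>t. norm ((norm s + t) powr (2 * k) * exp (- 2 * pi * t)) \<le> (1 / C) * norm (exp (- pi * t))) at_top"
    using landau_o.smallD[OF ra2[of "norm s" "2 * k"], of "1/C"] C by simp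
  moreover have "eventually (\<lambda>t::real. t > Y) at_top" by (rule eventually_gt_at_top)
  ultimately show ?thesis
  proof eventually_elim
    case (elim t)
    have t0: "t > 0" using elim Y by simp
    define w where "w = s + \<i> * of_real t"
    have Iw: "Im w = Im s + t" by (simp add: w_def)
    have nw: "norm w \<le> norm s + t" unfolding w_def using norm_triangle_ineq[of s "\<i> * of_real t"] t0 by (simp add: norm_mult)
    have "norm (gz z w * \<i>) = norm (gz z w)" by (simp add: norm_mult)
    also have "\<dots> \<le> C * exp (- 2 * pi * Im w) * norm w powr (2 * k)" using dec[of w] Iw s elim by simp
    also have "\<dots> \<le> C * exp (- 2 * pi * t) * (norm s + t) powr (2 * k)"
    proof (intro mult_mono mult_left_mono)
      show "exp (- 2 * pi * Im w) \<le> exp (- 2 * pi * t)" using Iw s by simp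
      show "norm w powr (2 * k) \<le> (norm s + t) powr (2 * k)" using nw k_gt by (intro powr_mono2) auto
    qed (use C in auto)
    also have "\<dots> = C * ((norm s + t) powr (2 * k) * exp (- 2 * pi * t))" by simp
    also have "\<dots> \<le> C * ((1 / C) * exp (- pi * t))" using elim(1) C by (intro mult_left_mono) auto
    finally show ?case using C by (simp add: w_def)
  qed
qed

lemma ray_cont: assumes s: "Im s \<ge> 0"
  shows "continuous_on {t. Im s + t > 0} (\<lambda>t. gz z (s + \<i> * of_real t) * \<i>)"
proof -
  have "continuous_on {t. Im s + t > 0} (\<lambda>t. gz z (s + \<i> * of_real t))"
    by (rule continuous_on_compose2[OF gz_cont]) (auto intro!: continuous_intros)
  then show ?thesis by (intro continuous_intros)
qed

lemma ray_deriv: assumes "Im s + t > 0"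
  shows "((\<lambda>t. GG z (s + \<i> * of_real t)) has_vector_derivative (gz z (s + \<i> * of_real t) * \<i>)) (at t)"
proof -
  have d1: "((\<lambda>t. s + \<i> * of_real t) has_vector_derivative \<i>) (at t)"
  proof -
    have "((\<lambda>x. s + \<i> * x) has_field_derivative \<i>) (at (of_real t))" by (auto intro!: derivative_eq_intros)
    then show ?thesis by (rule has_vector_derivative_real_field)
  qed
  have d2: "(GG z has_field_derivative gz z (s + \<i> * of_real t)) (at (s + \<i> * of_real t))"
    using assms by (intro GG_deriv) simp
  show ?thesis using field_vector_diff_chain_at[OF d1 d2] by (simp add: o_def mult.commute)
qed

lemma int_ray: assumes s: "Im s > 0"
  shows "set_integrable lborel {0..} (\<lambda>t. gz z (s + \<i> * of_real t) * \<i>)"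
proof -
  obtain T where T: "\<And>t. t \<ge> T \<Longrightarrow> norm (gz z (s + \<i> * of_real t) * \<i>) \<le> 1 * exp (- pi * t)"
    using gz_ray_ev[of s z] s unfolding eventually_at_top_linorder by auto
  show ?thesis
    by (rule si_exp_tail[OF _ _ T]) (auto intro: continuous_on_subset[OF ray_cont] simp: s less_imp_le add_pos_nonneg)
qed

lemma axis_int: "set_integrable lborel {0<..} (\<lambda>t. gz z (\<i> * of_real t) * \<i>)"
  using Pa_integrable[of z] by (simp add: gz_def)

definition "ell z = GG z \<i> + (LBINT t:{1..}. gz z (\<i> * of_real t) * \<i>)"
definition "lam z = GG z \<i> - (LBINT t:{0<..1}. gz z (\<i> * of_real t) * \<i>)"

lemma lim_top: "((\<lambda>T. GG z (\<i> * of_real T)) \<longlongrightarrow> ell z) at_top"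
proof -
  have "((\<lambda>T. GG z (0 + \<i> * of_real T)) \<longlongrightarrow> GG z (0 + \<i> * of_real 1) + (LBINT t:{1..}. gz z (0 + \<i> * of_real t) * \<i>)) at_top"
  proof (rule ftc_top)
    show "((\<lambda>t. GG z (0 + \<i> * of_real t)) has_vector_derivative gz z (0 + \<i> * of_real t) * \<i>) (at t)" if "t \<ge> 1" for t
      using that by (intro ray_deriv) simp
    show "continuous_on {1..} (\<lambda>t. gz z (0 + \<i> * of_real t) * \<i>)"
      by (rule continuous_on_subset[OF ray_cont]) auto
    show "set_integrable lborel {1..} (\<lambda>t. gz z (0 + \<i> * of_real t) * \<i>)"
    proof -
      have "set_integrable lborel {1..} (\<lambda>t. gz z (\<i> * of_real t) * \<i>)"
        by (rule set_integrable_subset[OF axis_int]) auto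
      then show ?thesis by (simp only: add_0_left)
    qed
  qed
  then show ?thesis by (simp add: ell_def)
qed

lemma lim_zero: "((\<lambda>e. GG z (\<i> * of_real e)) \<longlongrightarrow> lam z) (at_right 0)"
proof -
  have "((\<lambda>T. GG z (0 + \<i> * of_real T)) \<longlongrightarrow> GG z (0 + \<i> * of_real 1) - (LBINT t:{0<..1}. gz z (0 + \<i> * of_real t) * \<i>)) (at_right 0)"
  proof (rule ftc_right0)
    show "((\<lambda>t. GG z (0 + \<i> * of_real t)) has_vector_derivative gz z (0 + \<i> * of_real t) * \<i>) (at t)" if "t \<in> {0<..1}" for t
      using that by (intro ray_deriv) simp
    show "continuous_on {0<..1} (\<lambda>t. gz z (0 + \<i> * of_real t) * \<i>)"
      by (rule continuous_on_subset[OF ray_cont]) auto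
    show "set_integrable lborel {0<..1} (\<lambda>t. gz z (0 + \<i> * of_real t) * \<i>)"
    proof -
      have "set_integrable lborel {0<..1} (\<lambda>t. gz z (\<i> * of_real t) * \<i>)"
        by (rule set_integrable_subset[OF axis_int]) auto
      then show ?thesis by (simp only: add_0_left)
    qed
  qed simp
  then show ?thesis by (simp add: lam_def)
qed

lemma Pa_GG: "Pa k N a f z = ell z - lam z"
proof -
  have "Pa k N a f z = (LBINT t:{0<..}. gz z (\<i> * of_real t) * \<i>)"
    unfolding Pa_def by (simp add: gz_def)
  also have "{0<..} = {0<..1} \<union> {1::real..}" by auto
  also have "(LBINT t:{0<..1} \<union> {1..}. gz z (\<i> * of_real t) * \<i>)
      = (LBINT t:{0<..1}. gz z (\<i> * of_real t) * \<i>) + (LBINT t:{1..}. gz z (\<i> * of_real t) * \<i>)"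
  proof (rule set_integral_Un_AE)
    show "AE x in lborel. \<not> (x \<in> {0<..1} \<and> x \<in> {1::real..})"
      using AE_lborel_singleton[of "1::real"] by eventually_elim auto
    show "set_integrable lborel {0<..1} (\<lambda>t. gz z (\<i> * of_real t) * \<i>)"
      by (rule set_integrable_subset[OF axis_int]) auto
    show "set_integrable lborel {1..} (\<lambda>t. gz z (\<i> * of_real t) * \<i>)"
      by (rule set_integrable_subset[OF axis_int]) auto
  qed auto
  finally show ?thesis by (simp add: ell_def lam_def)
qed

end

lemma fl_inv: "c > 0 \<Longrightarrow> filterlim (\<lambda>e::real. 1 / (c * e)) at_top (at_right 0)"
  by real_asymp

lemma ra4': "((\<lambda>t::real. exp (- 2 * pi * t) * (b + t) powr c) \<longlongrightarrow> 0) at_top"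
  by real_asymp

context cf2 begin

lemma Fa_GG: assumes z: "Im z > 0" shows "Fa k N a f z = ell z - GG z z"
proof -
  have int: "set_integrable lborel {0..} (\<lambda>t. gz z (z + \<i> * of_real t) * \<i>)" by (rule int_ray[OF z])
  have lim1: "((\<lambda>T. GG z (z + \<i> * of_real T)) \<longlongrightarrow> GG z (z + \<i> * of_real 0) + (LBINT t:{0..}. gz z (z + \<i> * of_real t) * \<i>)) at_top"
  proof (rule ftc_top[OF _ _ int])
    show "((\<lambda>t. GG z (z + \<i> * of_real t)) has_vector_derivative gz z (z + \<i> * of_real t) * \<i>) (at t)" if "t \<ge> 0" for t
      using that z by (intro ray_deriv) simp
    show "continuous_on {0..} (\<lambda>t. gz z (z + \<i> * of_real t) * \<i>)"
      by (rule continuous_on_subset[OF ray_cont]) (use z in auto)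
  qed
  have lim2: "((\<lambda>T. GG z (z + \<i> * of_real T) - GG z (\<i> * of_real T)) \<longlongrightarrow> 0) at_top"
  proof -
    obtain C Y where C: "C > 0" and Y: "Y \<ge> 1" and dec: "\<And>w. Im w > Y \<Longrightarrow> norm (gz z w) \<le> C * exp (- 2 * pi * Im w) * norm w powr (2 * k)"
      using gz_decay[of z] by blast
    define B where "B T = C * exp (- 2 * pi * T) * (norm z + T) powr (2 * k)" for T
    have ev: "eventually (\<lambda>T. norm (GG z (z + \<i> * of_real T) - GG z (\<i> * of_real T)) \<le> B T * norm z) at_top"
      unfolding eventually_at_top_linorder
    proof (intro exI[of _ "Y + 1"] allI impI)
      fix T assume "T \<ge> Y + 1"
      then have elim: "T > Y" by linarith
      define S where "S = closed_segment (\<i> * of_real T) (z + \<i> * of_real T)"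
      have Sprop: "Im w \<ge> T \<and> norm w \<le> norm z + T" if "w \<in> S" for w
        using seg_prop[OF z _ that[unfolded S_def]] elim Y by linarith
      have bnd: "norm (gz z w) \<le> B T" if "w \<in> S" for w
      proof -
        have I: "Im w \<ge> T" and nw: "norm w \<le> norm z + T" using Sprop[OF that] by auto
        have IY: "Im w > Y" using I elim by linarith
        have e1: "exp (- 2 * pi * Im w) \<le> exp (- 2 * pi * T)" using I by simp
        have e2: "norm w powr (2 * k) \<le> (norm z + T) powr (2 * k)"
          using nw k_gt by (intro powr_mono2) auto
        have e3: "C * exp (- 2 * pi * Im w) \<le> C * exp (- 2 * pi * T)"
          by (rule mult_left_mono[OF e1]) (use C in simp)
        have "C * exp (- 2 * pi * Im w) * norm w powr (2 * k) \<le> C * exp (- 2 * pi * T) * (norm z + T) powr (2 * k)"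
          by (rule mult_mono[OF e3 e2]) (use C in simp_all)
        then show ?thesis using dec[OF IY] unfolding B_def by linarith
      qed
      have der: "(GG z has_field_derivative gz z w) (at w within S)" if "w \<in> S" for w
      proof -
        have "Im w > 0" using Sprop[OF that] elim Y by linarith
        then show ?thesis by (rule has_field_derivative_at_within[OF GG_deriv])
      qed
      have "norm (GG z (z + \<i> * of_real T) - GG z (\<i> * of_real T))
          \<le> B T * norm ((z + \<i> * of_real T) - \<i> * of_real T)"
        by (rule field_differentiable_bound[OF _ der bnd]) (simp_all add: S_def convex_closed_segment ends_in_segment)
      then show "norm (GG z (z + \<i> * of_real T) - GG z (\<i> * of_real T)) \<le> B T * norm z" by simp
    qed
    have "((\<lambda>T. C * (exp (- 2 * pi * T) * (norm z + T) powr (2 * k)) * norm z) \<longlongrightarrow> C * 0 * norm z) at_top"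
      by (intro tendsto_intros ra4')
    then have "((\<lambda>T. B T * norm z) \<longlongrightarrow> 0) at_top" by (simp add: B_def mult.assoc)
    then show ?thesis by (rule Lim_null_comparison[OF ev])
  qed
  have "((\<lambda>T. (GG z (z + \<i> * of_real T) - GG z (\<i> * of_real T)) + GG z (\<i> * of_real T)) \<longlongrightarrow> 0 + ell z) at_top"
    by (intro tendsto_add lim2 lim_top)
  then have lim3: "((\<lambda>T. GG z (z + \<i> * of_real T)) \<longlongrightarrow> ell z) at_top" by simp
  have eq: "GG z z + (LBINT t:{0..}. gz z (z + \<i> * of_real t) * \<i>) = ell z"
    using tendsto_unique[OF _ lim1 lim3] by simp
  have "Fa k N a f z = (LBINT t:{0<..}. gz z (z + \<i> * of_real t) * \<i>)"
    unfolding Fa_def by (simp add: gz_def)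
  also have "\<dots> = (LBINT t:{0..}. gz z (z + \<i> * of_real t) * \<i>)"
    by (rule set_integral_discrete_difference[where X="{0}"]) auto
  finally show ?thesis using eq by (simp add: algebra_simps)
qed

end

context cf2 begin
lemma kernel: assumes z: "Im z > 0" and s: "Im s > 0"
  shows "Ck k N m z s * Phi k N a (- 1 / (of_nat N * z)) (- 1 / (of_nat N * s)) = Phi k N a z s"
proof -
  have mm: "nat \<lfloor>k - 5/2\<rfloor> = m" by (simp add: m_def)
  have A: "(\<Sum>n = 0..m. Ck k N m z s * al k N a n (- 1 / (of_nat N * z)) (- 1 / (of_nat N * s))) = (\<Sum>n = 0..m. be k N a n z s)"
  proof -
    have "(\<Sum>n = 0..m. Ck k N m z s * al k N a n (- 1 / (of_nat N * z)) (- 1 / (of_nat N * s))) = (\<Sum>n = 0..m. be k N a (m - n) z s)"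
      by (rule sum.cong[OF refl], rule T1[OF N_pos z s m_real]) auto
    also have "\<dots> = (\<Sum>n = 0..m. be k N a n z s)" by (subst (2) sum.atLeastAtMost_rev) simp
    finally show ?thesis .
  qed
  have B: "(\<Sum>n = 0..m. Ck k N m z s * be k N a n (- 1 / (of_nat N * z)) (- 1 / (of_nat N * s))) = (\<Sum>n = 0..m. al k N a n z s)"
  proof -
    have "(\<Sum>n = 0..m. Ck k N m z s * be k N a n (- 1 / (of_nat N * z)) (- 1 / (of_nat N * s))) = (\<Sum>n = 0..m. al k N a (m - n) z s)"
      by (rule sum.cong[OF refl], rule T2[OF N_pos z s m_real]) auto
    also have "\<dots> = (\<Sum>n = 0..m. al k N a n z s)" by (subst (2) sum.atLeastAtMost_rev) simp
    finally show ?thesis .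
  qed
  show ?thesis unfolding Phi_eq mm sum_distrib_left distrib_left sum.distrib A B by (rule add.commute)
qed

end

context cf2 begin

lemma Im_inv: assumes "Im z > 0" shows "Im (- 1 / (of_nat N * z)) > 0"
proof -
  have nz: "of_nat N * z \<noteq> 0" using assms N_pos by auto
  have "Im (- 1 / (of_nat N * z)) = real N * Im z / (cmod (of_nat N * z))^2"
    by (simp add: Im_divide cmod_power2 power_mult_distrib)
  also have "\<dots> > 0" using assms N_pos nz by (intro divide_pos_pos) auto
  finally show ?thesis .
qed

lemma mnat: "- complex_of_real (5/2 - k) = of_nat m" "complex_of_real (k - 5/2) = of_nat m"
proof -
  have "5/2 - k = - real m" using m_real by simp
  then show "- complex_of_real (5/2 - k) = of_nat m" by simp
  show "complex_of_real (k - 5/2) = of_nat m" using m_real by (metis of_real_of_nat_eq)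
qed

lemma slashW: assumes z: "z \<noteq> 0"
  shows "slash_int (5/2 - k) (WN N) F z = (of_real (sqrt (real N)) * z) ^ m * F (- 1 / (of_nat N * z))"
proof -
  have sN: "sqrt (real N) \<noteq> 0" using N_pos by simp
  have e2: "complex_of_real (sqrt (real N)) * complex_of_real (sqrt (real N)) = of_nat N"
    by (simp flip: of_real_mult)
  have e3: "(complex_of_real 0 * z + complex_of_real (- 1 / sqrt (real N))) / (complex_of_real (sqrt (real N)) * z + complex_of_real 0)
      = - 1 / (of_nat N * z)"
  proof -
    have "(complex_of_real 0 * z + complex_of_real (- 1 / sqrt (real N))) / (complex_of_real (sqrt (real N)) * z + complex_of_real 0)
        = - 1 / (complex_of_real (sqrt (real N)) * complex_of_real (sqrt (real N)) * z)"
      using sN z by (simp add: field_simps)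
    then show ?thesis unfolding e2 .
  qed
  have bnz: "complex_of_real (sqrt (real N)) * z + complex_of_real 0 \<noteq> 0" using sN z by simp
  have "slash_int (5/2 - k) (WN N) F z = (complex_of_real (sqrt (real N)) * z + complex_of_real 0) powr (- complex_of_real (5/2 - k))
     * F ((complex_of_real 0 * z + complex_of_real (- 1 / sqrt (real N))) / (complex_of_real (sqrt (real N)) * z + complex_of_real 0))"
    unfolding slash_int_def WN_def by simp
  also have "\<dots> = (of_real (sqrt (real N)) * z) ^ m * F (- 1 / (of_nat N * z))"
    unfolding e3 mnat(1) powr_nat'[OF disjI1[OF bnz]] by simp
  finally show ?thesis .
qed

lemma iexp: "\<i> powr (complex_of_real (k - 5/2)) = \<i> ^ m"
  unfolding mnat(2) by (simp add: powr_nat')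

lemma slashId: "slash_int x idmat F z = F z"
  unfolding slash_int_def idmat_def by simp

lemma part_i: assumes z: "Im z > 0"
  shows "- (\<i> powr (of_real (k - 5/2))) * slash_int (5/2 - k) (WN N) (Fa k N a f) z + Fa k N a f z = Pa k N a f z"
proof -
  define z' where "z' = - 1 / (of_nat N * z)"
  have z': "Im z' > 0" unfolding z'_def by (rule Im_inv[OF z])
  have zn: "z \<noteq> 0" using z by auto
  define c where "c = \<i> ^ m * (of_real (sqrt (real N)) * z) ^ m"
  define R where "R s = GG z s - c * GG z' (- 1 / (of_nat N * s))" for s
  have Rd: "(R has_field_derivative 0) (at s within {w. Im w > 0})" if s: "s \<in> {w. Im w > 0}" for s
  proof -
    have s0: "Im s > 0" using s by simp
    have sn: "s \<noteq> 0" using s0 by auto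
    have Nn: "(of_nat N :: complex) \<noteq> 0" using N_pos by simp
    have dphi: "((\<lambda>s. - 1 / (of_nat N * s)) has_field_derivative 1 / (of_nat N * s ^ 2)) (at s)"
      using sn Nn by (auto intro!: derivative_eq_intros simp: field_simps power2_eq_square)
    have dG: "(GG z' has_field_derivative gz z' (- 1 / (of_nat N * s))) (at (- 1 / (of_nat N * s)))"
      by (rule GG_deriv[OF Im_inv[OF s0]])
    have dR: "(R has_field_derivative gz z s - c * (gz z' (- 1 / (of_nat N * s)) * (1 / (of_nat N * s ^ 2)))) (at s)"
    proof -
      have d2: "((\<lambda>s. c * GG z' (- 1 / (of_nat N * s))) has_field_derivative c * (gz z' (- 1 / (of_nat N * s)) * (1 / (of_nat N * s ^ 2)))) (at s)"
        by (rule DERIV_cmult[OF DERIV_chain2[OF dG dphi]])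
      show ?thesis unfolding R_def[abs_def] by (rule DERIV_diff[OF GG_deriv[OF s0] d2])
    qed
    have key: "c * (gz z' (- 1 / (of_nat N * s)) * (1 / (of_nat N * s ^ 2))) = gz z s"
    proof -
      have "gz z' (- 1 / (of_nat N * s)) = (- \<i> * of_real (sqrt (real N)) * s) powr (of_real k) * f s * Phi k N a z' (- 1 / (of_nat N * s))"
        unfolding gz_def f_W[OF s0] by simp
      then have "c * (gz z' (- 1 / (of_nat N * s)) * (1 / (of_nat N * s ^ 2)))
          = f s * (Ck k N m z s * Phi k N a z' (- 1 / (of_nat N * s)))"
        unfolding Ck_def[OF N_pos z s0 m_real] c_def using sn Nn by (simp add: field_simps)
      also have "\<dots> = f s * Phi k N a z s" unfolding z'_def kernel[OF z s0] ..
      finally show ?thesis by (simp add: gz_def)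
    qed
    have "(R has_field_derivative 0) (at s)" using dR unfolding key by simp
    then show ?thesis by (rule has_field_derivative_at_within)
  qed
  obtain c0 where c0: "\<And>s. s \<in> {w. Im w > 0} \<Longrightarrow> R s = c0"
    using has_field_derivative_zero_constant[OF H_convex Rd] by blast
  have lim1: "((\<lambda>e. R (\<i> * of_real e)) \<longlongrightarrow> lam z - c * ell z') (at_right 0)"
  proof -
    have l1: "((\<lambda>e. GG z (\<i> * of_real e)) \<longlongrightarrow> lam z) (at_right 0)" by (rule lim_zero)
    have l2: "((\<lambda>e. GG z' (\<i> * of_real (1 / (real N * e)))) \<longlongrightarrow> ell z') (at_right 0)"
      by (rule filterlim_compose[OF lim_top fl_inv]) (use N_pos in simp)
    have ev: "eventually (\<lambda>e. GG z (\<i> * of_real e) - c * GG z' (\<i> * of_real (1 / (real N * e))) = R (\<i> * of_real e)) (at_right 0)"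
      unfolding eventually_at_right_field
    proof (intro exI[of _ 1] conjI allI impI)
      fix e :: real assume e: "0 < e" "e < 1"
      have "- 1 / (of_nat N * (\<i> * of_real e)) = \<i> * of_real (1 / (real N * e))"
        using e N_pos by (simp add: field_simps)
      then show "GG z (\<i> * of_real e) - c * GG z' (\<i> * of_real (1 / (real N * e))) = R (\<i> * of_real e)"
        by (simp add: R_def)
    qed simp
    show ?thesis by (rule Lim_transform_eventually[OF tendsto_diff[OF l1 tendsto_mult[OF tendsto_const l2]] ev])
  qed
  have lim2: "((\<lambda>e. R (\<i> * of_real e)) \<longlongrightarrow> R z) (at_right 0)"
  proof -
    have "eventually (\<lambda>e. R z = R (\<i> * of_real e)) (at_right 0)"
      unfolding eventually_at_right_field
      by (intro exI[of _ 1] conjI allI impI) (use c0 z in auto)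
    then show ?thesis by (rule Lim_transform_eventually[OF tendsto_const])
  qed
  have Rz: "R z = lam z - c * ell z'"
    using tendsto_unique[OF _ lim2 lim1] by simp
  have "- (\<i> powr (of_real (k - 5/2))) * slash_int (5/2 - k) (WN N) (Fa k N a f) z + Fa k N a f z
      = - c * Fa k N a f z' + Fa k N a f z"
    unfolding iexp slashW[OF zn] c_def z'_def by simp
  also have "\<dots> = ell z - (GG z z - c * GG z' z') - c * ell z'"
    unfolding Fa_GG[OF z] Fa_GG[OF z'] by (simp add: algebra_simps)
  also have "GG z z - c * GG z' z' = R z" by (simp add: R_def z'_def)
  also have "ell z - R z - c * ell z' = Pa k N a f z" unfolding Rz Pa_GG by simp
  finally show ?thesis .
qed

end

lemma cnj_i_powr: "cnj (\<i> powr (complex_of_real x)) = \<i> powr (complex_of_real (- x))"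
  by (simp add: powr_def exp_cnj Ln_ii)

lemma i_pow_4dvd: "4 dvd m \<Longrightarrow> \<i> ^ m = 1"
proof -
  assume "4 dvd m"
  then obtain q where q: "m = 4 * q" by (auto elim: dvdE)
  have "\<i> ^ m = ((\<i> ^ 2) ^ 2) ^ q" unfolding q by (simp add: power_mult)
  also have "\<dots> = 1" by simp
  finally show ?thesis .
qed

context cf2 begin

lemma chi_core: assumes z: "Im z > 0"
  shows "\<i> ^ m * slash_int (5/2 - k) (WN N) (Pa k N a f) z + Pa k N a f z = 0"
proof -
  define z' where "z' = - 1 / (of_nat N * z)"
  have z': "Im z' > 0" unfolding z'_def by (rule Im_inv[OF z])
  have zn: "z \<noteq> 0" using z by auto
  have z'n: "z' \<noteq> 0" using z' by auto
  have Nn: "(of_nat N :: complex) \<noteq> 0" using N_pos by simp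
  have zz: "- 1 / (of_nat N * z') = z" unfolding z'_def using zn Nn by (simp add: field_simps)
  define A where "A = (\<i> :: complex) ^ m"
  define B where "B = (of_real (sqrt (real N)) * z) ^ m"
  define B' where "B' = (of_real (sqrt (real N)) * z') ^ m"
  have Pz: "Pa k N a f z = Fa k N a f z - A * (B * Fa k N a f z')"
    using part_i[OF z] unfolding iexp slashW[OF zn] A_def B_def z'_def by (simp add: algebra_simps)
  have Pz': "Pa k N a f z' = Fa k N a f z' - A * (B' * Fa k N a f z)"
    using part_i[OF z'] unfolding iexp slashW[OF z'n] A_def B'_def zz by (simp add: algebra_simps)
  have sl: "slash_int (5/2 - k) (WN N) (Pa k N a f) z = B * Pa k N a f z'"
    unfolding slashW[OF zn] B_def z'_def ..
  have AA: "A * A = (- 1) ^ m" unfolding A_def by (simp add: power_mult_distrib[symmetric])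
  have BB: "B * B' = (- 1) ^ m"
  proof -
    have "complex_of_real (sqrt (real N)) * z * (complex_of_real (sqrt (real N)) * z') = - 1"
    proof -
      have "complex_of_real (sqrt (real N)) * complex_of_real (sqrt (real N)) = of_nat N"
        by (simp flip: of_real_mult)
      then have "complex_of_real (sqrt (real N)) * z * (complex_of_real (sqrt (real N)) * z') = of_nat N * z * z'"
        by (simp add: algebra_simps)
      also have "\<dots> = - 1" unfolding z'_def using zn Nn by (simp add: field_simps)
      finally show ?thesis .
    qed
    then show ?thesis unfolding B_def B'_def by (simp add: power_mult_distrib[symmetric])
  qed
  have m1: "(- 1 :: complex) ^ m * (- 1) ^ m = 1" by (simp add: power_mult_distrib[symmetric])
  have "A * (B * (Fa k N a f z' - A * (B' * Fa k N a f z))) + (Fa k N a f z - A * (B * Fa k N a f z'))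
      = Fa k N a f z - (A * A) * (B * B') * Fa k N a f z" by (simp add: algebra_simps)
  also have "\<dots> = 0" unfolding AA BB m1 by simp
  finally show ?thesis unfolding sl Pz' Pz A_def[symmetric] .
qed

lemma chi_idmat: assumes "is_character N chi" shows "chi idmat = 1"
proof -
  have "(1, 0, 0, 1) \<in> Gamma0 N" by (simp add: Gamma0_def)
  then have "mat_of_int (1, 0, 0, 1) \<in> Gamma0_star N" by (rule Gamma0_star.gen)
  then have I: "idmat \<in> Gamma0_star N" by (simp add: mat_of_int_def idmat_def)
  have "mmul idmat idmat = idmat" by (simp add: mmul_def idmat_def)
  then have "chi idmat = chi idmat * chi idmat" using assms I unfolding is_character_def by metis
  moreover have "chi idmat \<noteq> 0" using assms I unfolding is_character_def by blast
  ultimately show ?thesis by (metis mult_cancel_left1)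
qed

end

theorem theorem3p1:
  fixes k :: real and N :: nat and a :: real and f :: "complex \<Rightarrow> complex"
  assumes k_half: "k - 1/2 \<in> \<int>"
    and k_gt: "k > 5/2"
    and N_pos: "N > 0"
    and N_4: "4 dvd N"
    and f_cusp: "cusp_form_star k N f"
    and a_lo: "0 \<le> a"
    and a_hi: "a \<le> 2 * k - 9/2"
  shows
    "(\<forall>z\<in>upper_half_plane.
        - (\<i> powr (of_real (k - 5/2))) * slash_int (5/2 - k) (WN N) (Fa k N a f) z
        + Fa k N a f z = Pa k N a f z)
   \<and> (\<forall>chi. is_character N chi \<and> chi (WN N) = \<i> powr (of_real (5/2 - k)) \<longrightarrow>
        (\<forall>z\<in>upper_half_plane.
           slash_int_chi (5/2 - k) chi (WN N) (Pa k N a f) z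
           + slash_int_chi (5/2 - k) chi idmat (Pa k N a f) z = 0))
   \<and> ((k - 5/2) / 4 \<in> \<int> \<longrightarrow>
        (\<forall>z\<in>upper_half_plane.
           slash_int (5/2 - k) (WN N) (Pa k N a f) z
           + slash_int (5/2 - k) idmat (Pa k N a f) z = 0))
   \<and> (\<exists>p :: complex poly. degree p \<le> nat \<lfloor>k - 5/2\<rfloor> \<and> (\<forall>z. Pa k N a f z = poly p z))
   \<and> (\<forall>z. Pa k N a f z =
        \<i> powr (of_real (a + 1)) *
        (\<Sum>n = 0..nat \<lfloor>k - 5/2\<rfloor>.
           (of_real (gbinom (k - 2) (real n)) * of_nat N ^ n
              * Lambda f (of_real (a + 1 - real n))
            + of_real (gbinom (k - 2) (real n + 1/2))
              * of_real (real N powr (2 * k - a - real n - 19/4))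
              * \<i> powr (of_real (2 * real n - k + 1/2))
              * Lambda f (of_real (2 * k - 7/2 - a - real n))) * z ^ n))"
proof -
  interpret cf2 k N f a
    by unfold_locales (use k_half k_gt N_pos f_cusp a_lo a_hi in auto)
  have P1: "\<forall>z\<in>upper_half_plane.
        - (\<i> powr (of_real (k - 5/2))) * slash_int (5/2 - k) (WN N) (Fa k N a f) z
        + Fa k N a f z = Pa k N a f z"
    using part_i by (auto simp: upper_half_plane_def)
  have P2: "\<forall>chi. is_character N chi \<and> chi (WN N) = \<i> powr (of_real (5/2 - k)) \<longrightarrow>
        (\<forall>z\<in>upper_half_plane.
           slash_int_chi (5/2 - k) chi (WN N) (Pa k N a f) z
           + slash_int_chi (5/2 - k) chi idmat (Pa k N a f) z = 0)"
  proof (intro allI impI ballI)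
    fix chi z assume chi: "is_character N chi \<and> chi (WN N) = \<i> powr (of_real (5/2 - k))"
      and z: "z \<in> upper_half_plane"
    have cW: "cnj (chi (WN N)) = \<i> ^ m" using chi cnj_i_powr[of "5/2 - k"] iexp by simp
    have cI: "cnj (chi idmat) = 1" using chi_idmat chi by simp
    show "slash_int_chi (5/2 - k) chi (WN N) (Pa k N a f) z
           + slash_int_chi (5/2 - k) chi idmat (Pa k N a f) z = 0"
      unfolding slash_int_chi_def cW cI slashId using chi_core z by (simp add: upper_half_plane_def)
  qed
  have P3: "(k - 5/2) / 4 \<in> \<int> \<longrightarrow>
        (\<forall>z\<in>upper_half_plane.
           slash_int (5/2 - k) (WN N) (Pa k N a f) z
           + slash_int (5/2 - k) idmat (Pa k N a f) z = 0)"
  proof (intro impI ballI)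
    fix z assume h: "(k - 5/2) / 4 \<in> \<int>" and z: "z \<in> upper_half_plane"
    obtain j :: int where j: "(k - 5/2) / 4 = of_int j" using h by (auto elim: Ints_cases)
    have "real m = of_int (4 * j)" using j m_real by simp
    then have "int m = 4 * j" by (metis of_int_eq_iff of_int_of_nat_eq)
    then have "4 dvd m" by presburger
    then have im: "\<i> ^ m = 1" by (rule i_pow_4dvd)
    show "slash_int (5/2 - k) (WN N) (Pa k N a f) z + slash_int (5/2 - k) idmat (Pa k N a f) z = 0"
      using chi_core[of z] z unfolding slashId im by (simp add: upper_half_plane_def)
  qed
  show ?thesis using P1 P2 P3 Pa_poly Pa_formula by blast
qed

end
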